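(* Let $n,m\ge1$ and $x_1,\dots,x_m,y_1,\dots,y_m,z\in\mathbb{N}^{2n}$ with $x_i\le z$ and $y_i\le z$ for all $i$. Then there exist natural numbers $1\le a_1\le b_1\le a_2\le b_2\le\dots\le a_n\le b_n\le m+1$ such that for $I=\bigcup_{i=1}^n\{a_i,a_i+1,\dots,b_i-1\}$, \[-2nz+\frac12\sum_{i=1}^m(x_i+y_i)\;\le\;\sum_{i\in I}x_i+\sum_{i\in\{1,\dots,m\}\setminus I}y_i\;\le\;2nz+\frac12\sum_{i=1}^m(x_i+y_i).\]
   Context: For vectors $u,v\in\mathbb{R}^{2n}$, $u\le v$ means $u_j\le v_j$ for every component $j$. $\{a,\dots,b-1\}$ is empty if $b=a$. *)

theory Defs
  imports Complex_Main
begin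

end

theory Submission
  imports Defs "HOL-Analysis.Analysis"
begin

lemma ksimplex_perm:
  assumes "ksimplex p n s" "bij \<pi>" "\<pi> ` {..<n} = {..<n}"
  shows "ksimplex p n ((\<lambda>y. y \<circ> \<pi>) ` s)"
  using assms(1)
proof cases
  case (ksimplex base upd)
  then interpret kuhn_simplex p n base upd s .
  have inj: "inj \<pi>" using assms(2) bij_is_inj by blast
  have pin: "\<And>i. \<pi> i < n \<longleftrightarrow> i < n"
  proof -
    fix i show "\<pi> i < n \<longleftrightarrow> i < n"
    proof
      assume "\<pi> i < n"
      then obtain j where "j < n" "\<pi> j = \<pi> i" using assms(3) by (metis imageE lessThan_iff)
      then show "i < n" using inj by (metis injD)
    next
      assume "i < n" then show "\<pi> i < n" using assms(3) by auto
    qed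
  qed
  have bpi: "bij_betw \<pi> {..<n} {..<n}"
    using assms(3) inj by (metis bij_betw_def inj_on_subset subset_UNIV)
  have binv: "bij_betw (inv \<pi>) {..<n} {..<n}"
    by (metis assms(2,3) bij_betw_imp_surj_on bij_betw_inv_into_subset bij_is_inj bpi inv_into_image_cancel subset_UNIV)
  show ?thesis
  proof (intro ksimplex.intros, unfold_locales)
    show "base \<circ> \<pi> \<in> {..<n} \<rightarrow> {..<p}" using base pin by auto
    show "\<And>i. n \<le> i \<Longrightarrow> (base \<circ> \<pi>) i = p" using base_out pin by (simp add: not_less[symmetric])
    show "bij_betw (inv \<pi> \<circ> upd) {..<n} {..<n}" using upd binv bij_betw_trans by blast
    show "(\<lambda>y. y \<circ> \<pi>) ` s = (\<lambda>i j. if j \<in> (inv \<pi> \<circ> upd) ` {..<i} then Suc ((base \<circ> \<pi>) j) else (base \<circ> \<pi>) j) ` {..n}"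
    proof -
      have e: "\<And>j A. (j \<in> (\<lambda>x. inv \<pi> (upd x)) ` A) = (\<pi> j \<in> upd ` A)"
        using assms(2) by (auto simp: bij_def image_iff) (metis assms(2) bij_inv_eq_iff)+
      show ?thesis unfolding s_pre image_image by (intro image_cong refl) (simp add: e fun_eq_iff)
    qed
  qed
qed

lemma invol_bij: "(\<And>x. h (h x) = x) \<Longrightarrow> bij h"
  by (rule o_bij[where g=h]) (auto simp: fun_eq_iff)

lemma ex_perm:
  fixes A B :: "'a set"
  assumes "finite A" "finite B" "card A = card B"
  shows "\<exists>h. bij h \<and> h ` A = B"
proof -
  define A' where "A' = A - B"
  define B' where "B' = B - A"
  have "card A' = card B'"
    unfolding A'_def B'_def using assms
    by (simp add: card_Diff_subset_Int Int_commute)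
  moreover have "finite A'" "finite B'" unfolding A'_def B'_def using assms by auto
  ultimately obtain g where g: "bij_betw g A' B'"
    using finite_same_card_bij by blast
  define h where "h x = (if x \<in> A' then g x else if x \<in> B' then inv_into A' g x else x)" for x
  have dis: "A' \<inter> B' = {}" unfolding A'_def B'_def by auto
  have hh: "h (h x) = x" for x
  proof -
    consider "x \<in> A'" | "x \<in> B'" | "x \<notin> A'" "x \<notin> B'" by blast
    then show ?thesis
    proof cases
      case 1
      then have "g x \<in> B'" using g bij_betwE by blast
      then have "g x \<notin> A'" using dis by blast
      then show ?thesis using 1 \<open>g x \<in> B'\<close> g by (simp add: h_def bij_betw_inv_into_left)
    next
      case 2
      then have "inv_into A' g x \<in> A'" using g by (meson bij_betwE bij_betw_inv_into)
      then show ?thesis using 2 dis g by (auto simp: h_def bij_betw_inv_into_right)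
    next
      case 3 then show ?thesis by (simp add: h_def)
    qed
  qed
  have "h ` A = B"
  proof -
    have "h ` A = h ` A' \<union> h ` (A \<inter> B)" unfolding A'_def by blast
    also have "h ` A' = B'" using g by (auto simp: h_def bij_betw_def)
    also have "h ` (A \<inter> B) = A \<inter> B" by (auto simp: h_def A'_def B'_def)
    finally show ?thesis unfolding B'_def by blast
  qed
  then show ?thesis using invol_bij[OF hh] by blast
qed

definition sw :: "nat \<Rightarrow> nat \<Rightarrow> nat \<Rightarrow> nat" where
  "sw a b x = (if x = a then b else if x = b then a else x)"

lemma sw_bij: "bij (sw a b)"
  by (rule invol_bij) (simp add: sw_def)

lemma sw_image: "a \<in> (A::nat set) \<Longrightarrow> b \<in> A \<Longrightarrow> sw a b ` A = A"
proof
  assume "a \<in> A" "b \<in> A"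
  then show "sw a b ` A \<subseteq> A" by (auto simp: sw_def)
  show "A \<subseteq> sw a b ` A"
  proof
    fix x assume "x \<in> A"
    then have "sw a b x \<in> A" using \<open>a \<in> A\<close> \<open>b \<in> A\<close> by (simp add: sw_def)
    moreover have "sw a b (sw a b x) = x" by (simp add: sw_def)
    ultimately show "x \<in> sw a b ` A" by (metis imageI)
  qed
qed

lemma ex_perm_last:
  fixes S :: "nat set"
  assumes "finite S" "i \<in> S"
  shows "\<exists>h. bij h \<and> h ` S = {..<card S} \<and> h i = card S - 1"
proof -
  obtain h where h: "bij h" "h ` S = {..<card S}"
    using ex_perm[of S "{..<card S}"] assms by auto
  have c: "card S > 0" using assms card_gt_0_iff by blast
  define h2 where "h2 = sw (h i) (card S - 1) \<circ> h"
  have "bij h2" unfolding h2_def using h sw_bij bij_comp by blast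
  moreover have "h i < card S" using h assms by auto
  then have "sw (h i) (card S - 1) ` {..<card S} = {..<card S}"
    using c by (intro sw_image) auto
  then have "h2 ` S = {..<card S}" unfolding h2_def using h by (metis image_comp)
  moreover have "h2 i = card S - 1" by (simp add: h2_def sw_def)
  ultimately show ?thesis by blast
qed

definition KS :: "nat \<Rightarrow> nat set \<Rightarrow> (nat \<Rightarrow> nat) set \<Rightarrow> bool" where
  "KS p S s \<longleftrightarrow> (\<exists>h s0. bij h \<and> h ` S = {..<card S} \<and> ksimplex p (card S) s0 \<and> s = (\<lambda>y. y \<circ> h) ` s0)"

lemma KS_any_h:
  assumes "KS p S s" "bij h" "h ` S = {..<card S}"
  shows "\<exists>s0. ksimplex p (card S) s0 \<and> s = (\<lambda>y. y \<circ> h) ` s0"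
proof -
  obtain h' s0 where h': "bij h'" "h' ` S = {..<card S}" "ksimplex p (card S) s0" "s = (\<lambda>y. y \<circ> h') ` s0"
    using assms(1) unfolding KS_def by blast
  define \<pi> where "\<pi> = h' \<circ> inv h"
  have "bij \<pi>" unfolding \<pi>_def using h'(1) assms(2) bij_comp bij_imp_bij_inv by blast
  moreover have "inv h ` {..<card S} = S"
    using assms(2,3) by (metis bij_is_inj image_inv_f_f)
  then have "\<pi> ` {..<card S} = {..<card S}" unfolding \<pi>_def using h'(2) by (metis image_comp)
  ultimately have k: "ksimplex p (card S) ((\<lambda>y. y \<circ> \<pi>) ` s0)" using ksimplex_perm h'(3) by blast
  have "(\<lambda>y. y \<circ> h) ` ((\<lambda>y. y \<circ> \<pi>) ` s0) = s"
    unfolding image_image h'(4) \<pi>_def using assms(2)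
    by (intro image_cong refl) (simp add: fun_eq_iff inv_f_f[OF bij_is_inj[OF assms(2)]])
  then show ?thesis using k by blast
qed

lemma comp_h_inj:
  assumes "bij h" shows "inj (\<lambda>y::nat\<Rightarrow>nat. y \<circ> h)"
proof (rule injI)
  fix x y :: "nat \<Rightarrow> nat" assume "x \<circ> h = y \<circ> h"
  show "x = y"
  proof
    fix t
    have "t = h (inv h t)" using assms by (simp add: bij_is_surj surj_f_inv_f)
    then show "x t = y t" using \<open>x \<circ> h = y \<circ> h\<close> by (metis comp_apply)
  qed
qed

lemma ex_h: "finite (S::nat set) \<Longrightarrow> \<exists>h. bij h \<and> h ` S = {..<card S}"
  using ex_perm[of S "{..<card S}"] by auto

lemma h_out:
  assumes "bij h" "h ` S = {..<card S}" "j \<notin> S"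
  shows "card S \<le> h j"
proof (rule ccontr)
  assume "\<not> card S \<le> h j"
  then have "h j \<in> h ` S" using assms(2) by auto
  then show False using assms(3) inj_image_mem_iff[OF bij_is_inj[OF assms(1)]] by simp
qed

lemma h_in:
  assumes "h ` S = {..<card S}" "j \<in> S"
  shows "h j < card S"
  using assms by auto

lemma KS_finite:
  assumes "finite S" shows "finite {s. KS p S s}"
proof -
  obtain h where h: "bij h" "h ` S = {..<card S}" using ex_h assms by blast
  have "{s. KS p S s} \<subseteq> (\<lambda>s0. (\<lambda>y. y \<circ> h) ` s0) ` {s0. ksimplex p (card S) s0}"
  proof
    fix s assume "s \<in> {s. KS p S s}"
    then obtain s0 where "ksimplex p (card S) s0" "s = (\<lambda>y. y \<circ> h) ` s0" using KS_any_h[of p S s h] h by auto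
    then show "s \<in> (\<lambda>s0. (\<lambda>y. y \<circ> h) ` s0) ` {s0. ksimplex p (card S) s0}" by auto
  qed
  then show ?thesis by (rule finite_subset[OF _ finite_imageI[OF finite_ksimplexes]])
qed

lemma KS_card:
  assumes "KS p S s" shows "card s = Suc (card S)"
proof -
  obtain h s0 where "bij h" "ksimplex p (card S) s0" "s = (\<lambda>y. y \<circ> h) ` s0"
    using assms unfolding KS_def by blast
  then show ?thesis using ksimplex_card card_image[OF inj_on_subset[OF comp_h_inj[OF \<open>bij h\<close>] subset_UNIV]]
    by simp
qed

lemma KS_vertex:
  assumes "KS p S s" "w \<in> s"
  shows "w j \<le> p" "j \<notin> S \<Longrightarrow> w j = p"
proof -
  obtain h s0 where h: "bij h" "h ` S = {..<card S}" "ksimplex p (card S) s0" "s = (\<lambda>y. y \<circ> h) ` s0"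
    using assms unfolding KS_def by blast
  then obtain y where y: "y \<in> s0" "w = y \<circ> h" using assms(2) by blast
  from h(3) obtain b u where "kuhn_simplex p (card S) b u s0" by (auto elim: ksimplex.cases)
  then interpret kuhn_simplex p "card S" b u s0 .
  show "w j \<le> p" using y s_le_p by simp
  show "j \<notin> S \<Longrightarrow> w j = p" using y out_eq_p h_out[OF h(1,2)] by simp
qed

lemma KS_close:
  assumes "KS p S s" "u \<in> s" "v \<in> s"
  shows "u j \<le> Suc (v j)"
proof -
  obtain h s0 where h: "bij h" "h ` S = {..<card S}" "ksimplex p (card S) s0" "s = (\<lambda>y. y \<circ> h) ` s0"
    using assms unfolding KS_def by blast
  then obtain y z where y: "y \<in> s0" "u = y \<circ> h" "z \<in> s0" "v = z \<circ> h" using assms(2,3) by blast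
  from h(3) obtain b upd where "kuhn_simplex p (card S) b upd s0" by (auto elim: ksimplex.cases)
  then interpret kuhn_simplex p "card S" b upd s0 .
  show ?thesis using y le_Suc_base[of y "h j"] base_le[of z "h j"] by simp
qed

lemma KS_base:
  assumes "KS p S s"
  shows "\<exists>w\<in>s. \<forall>j\<in>S. w j < p"
proof -
  obtain h s0 where h: "bij h" "h ` S = {..<card S}" "ksimplex p (card S) s0" "s = (\<lambda>y. y \<circ> h) ` s0"
    using assms unfolding KS_def by blast
  from h(3) obtain b upd where "kuhn_simplex p (card S) b upd s0" by (auto elim: ksimplex.cases)
  then interpret kuhn_simplex p "card S" b upd s0 .
  have "b \<circ> h \<in> s" using h(4) base_in_s by blast
  moreover have "\<forall>j\<in>S. (b \<circ> h) j < p" using base h(2) by auto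
  ultimately show ?thesis by blast
qed

lemma KS_top:
  assumes "KS p S s"
  shows "\<exists>w\<in>s. \<forall>j\<in>S. 0 < w j"
proof -
  obtain h s0 where h: "bij h" "h ` S = {..<card S}" "ksimplex p (card S) s0" "s = (\<lambda>y. y \<circ> h) ` s0"
    using assms unfolding KS_def by blast
  from h(3) obtain b upd where "kuhn_simplex p (card S) b upd s0" by (auto elim: ksimplex.cases)
  then interpret kuhn_simplex p "card S" b upd s0 .
  have "enum (card S) \<circ> h \<in> s" using h(4) enum_in by blast
  moreover have "\<forall>j\<in>S. 0 < (enum (card S) \<circ> h) j"
    using h(2) upd_surj by (auto simp: enum_def)
  ultimately show ?thesis by blast
qed

lemma comp_h_img_inj:
  assumes "bij h" shows "inj (\<lambda>t::(nat\<Rightarrow>nat) set. (\<lambda>y. y \<circ> h) ` t)"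
  using comp_h_inj[OF assms] by (simp add: inj_def inj_image_eq_iff)

lemma comp_h_diff:
  assumes "bij h" shows "(\<lambda>y::nat\<Rightarrow>nat. y \<circ> h) ` (t - {b}) = (\<lambda>y. y \<circ> h) ` t - {b \<circ> h}"
  using comp_h_inj[OF assms] by (simp add: image_set_diff)

lemma KS_replace:
  assumes "KS p S s" "a \<in> s" "S \<noteq> {}" "finite S"
  shows "card {s'. KS p S s' \<and> (\<exists>b\<in>s'. s' - {b} = s - {a})} =
    (if (\<exists>j\<in>S. \<forall>x\<in>s-{a}. x j = 0) \<or> (\<exists>j\<in>S. \<forall>x\<in>s-{a}. x j = p) then 1 else 2)"
proof -
  obtain h s0 where h: "bij h" "h ` S = {..<card S}" "ksimplex p (card S) s0" "s = (\<lambda>y. y \<circ> h) ` s0"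
    using assms unfolding KS_def by blast
  obtain a0 where a0: "a0 \<in> s0" "a = a0 \<circ> h" using assms(2) h(4) by blast
  define \<Phi> where "\<Phi> = (\<lambda>t::(nat\<Rightarrow>nat) set. (\<lambda>y. y \<circ> h) ` t)"
  have injP: "inj \<Phi>" unfolding \<Phi>_def using comp_h_img_inj[OF h(1)] .
  have sa: "s - {a} = \<Phi> (s0 - {a0})" unfolding \<Phi>_def h(4) a0(2) using comp_h_diff[OF h(1)] by simp
  have eq: "{s'. KS p S s' \<and> (\<exists>b\<in>s'. s' - {b} = s - {a})} =
      \<Phi> ` {t. ksimplex p (card S) t \<and> (\<exists>b\<in>t. t - {b} = s0 - {a0})}"
  proof (intro equalityI subsetI)
    fix s' assume "s' \<in> {s'. KS p S s' \<and> (\<exists>b\<in>s'. s' - {b} = s - {a})}"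
    then have s': "KS p S s'" "\<exists>b\<in>s'. s' - {b} = s - {a}" by auto
    obtain t where t: "ksimplex p (card S) t" "s' = \<Phi> t" using KS_any_h[of p S s' h] s'(1) h(1,2) unfolding \<Phi>_def by auto
    obtain b where b: "b \<in> s'" "s' - {b} = s - {a}" using s'(2) by blast
    obtain b0 where b0: "b0 \<in> t" "b = b0 \<circ> h" using b(1) t(2) unfolding \<Phi>_def by blast
    have "\<Phi> (t - {b0}) = \<Phi> (s0 - {a0})" using b(2) sa t(2) b0(2) comp_h_diff[OF h(1)] unfolding \<Phi>_def by simp
    then have "t - {b0} = s0 - {a0}" using injP by (simp add: inj_eq)
    then show "s' \<in> \<Phi> ` {t. ksimplex p (card S) t \<and> (\<exists>b\<in>t. t - {b} = s0 - {a0})}"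
      using t b0 by blast
  next
    fix s' assume "s' \<in> \<Phi> ` {t. ksimplex p (card S) t \<and> (\<exists>b\<in>t. t - {b} = s0 - {a0})}"
    then obtain t b0 where t: "ksimplex p (card S) t" "b0 \<in> t" "t - {b0} = s0 - {a0}" "s' = \<Phi> t" by blast
    have "KS p S s'" unfolding KS_def using h(1,2) t(1,4) unfolding \<Phi>_def by blast
    moreover have "s' - {b0 \<circ> h} = s - {a}"
    proof -
      have "s' - {b0 \<circ> h} = \<Phi> (t - {b0})" by (simp add: \<Phi>_def t(4) comp_h_diff[OF h(1)])
      then show ?thesis using t(3) sa by simp
    qed
    moreover have "b0 \<circ> h \<in> s'" using t(2,4) unfolding \<Phi>_def by blast
    ultimately show "s' \<in> {s'. KS p S s' \<and> (\<exists>b\<in>s'. s' - {b} = s - {a})}" by blast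
  qed
  have ceq: "card {s'. KS p S s' \<and> (\<exists>b\<in>s'. s' - {b} = s - {a})} =
      card {t. ksimplex p (card S) t \<and> (\<exists>b\<in>t. t - {b} = s0 - {a0})}"
    unfolding eq using injP by (simp add: card_image inj_on_subset)
  have tr: "(\<exists>j\<in>S. \<forall>x\<in>s-{a}. x j = c) \<longleftrightarrow> (\<exists>j<card S. \<forall>y\<in>s0-{a0}. y j = c)" for c
  proof
    assume "\<exists>j\<in>S. \<forall>x\<in>s-{a}. x j = c"
    then obtain j where j: "j \<in> S" "\<forall>x\<in>s-{a}. x j = c" by blast
    have "\<forall>y\<in>s0-{a0}. y (h j) = c"
    proof
      fix y assume "y \<in> s0 - {a0}"
      then have "y \<circ> h \<in> s - {a}" using sa unfolding \<Phi>_def by blast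
      then have "(y \<circ> h) j = c" using j(2) by blast
      then show "y (h j) = c" by simp
    qed
    then show "\<exists>j<card S. \<forall>y\<in>s0-{a0}. y j = c" using j(1) h(2) by blast
  next
    assume "\<exists>j<card S. \<forall>y\<in>s0-{a0}. y j = c"
    then obtain j where j: "j < card S" "\<forall>y\<in>s0-{a0}. y j = c" by blast
    have "j \<in> h ` S" using j(1) h(2) by simp
    then obtain i where i: "i \<in> S" "h i = j" by blast
    have "\<forall>x\<in>s-{a}. x i = c"
    proof
      fix x assume "x \<in> s - {a}"
      then obtain y where "y \<in> s0 - {a0}" "x = y \<circ> h" using sa unfolding \<Phi>_def by blast
      then show "x i = c" using j(2) i(2) by simp
    qed
    then show "\<exists>j\<in>S. \<forall>x\<in>s-{a}. x j = c" using i(1) by blast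
  qed
  show ?thesis
  proof (cases "(\<exists>j\<in>S. \<forall>x\<in>s-{a}. x j = 0)")
    case True
    then obtain j where "j < card S" "\<forall>y\<in>s0-{a0}. y j = 0" using tr[of 0] by blast
    then show ?thesis using ksimplex_replace_0[OF h(3) a0(1)] ceq True by simp
  next
    case F0: False
    show ?thesis
    proof (cases "(\<exists>j\<in>S. \<forall>x\<in>s-{a}. x j = p)")
      case True
      then obtain j where "j < card S" "\<forall>y\<in>s0-{a0}. y j = p" using tr[of p] by blast
      then show ?thesis using ksimplex_replace_1[OF h(3) a0(1)] ceq True by simp
    next
      case F1: False
      have "card S \<noteq> 0" using assms(3,4) by simp
      moreover have "\<forall>j<card S. \<exists>x\<in>s0 - {a0}. x j \<noteq> 0" using F0 tr[of 0] by blast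
      moreover have "\<forall>j<card S. \<exists>x\<in>s0 - {a0}. x j \<noteq> p" using F1 tr[of p] by blast
      ultimately show ?thesis using ksimplex_replace_2[OF h(3) a0(1)] ceq F0 F1 by simp
    qed
  qed
qed

lemma lessThan_minus_last: "{..<Suc m} - {m} = {..<m}"
  by auto

lemma img_minus_last:
  assumes "bij h" "h ` S = {..<card S}" "h i = card S - 1" "card S = Suc (card S - 1)"
  shows "h ` (S - {i}) = {..<card S - 1}"
proof -
  have "h ` (S - {i}) = h ` S - {h i}" using image_set_diff[OF bij_is_inj[OF assms(1)]] by simp
  also have "\<dots> = {..<Suc (card S - 1)} - {card S - 1}" using assms(2,3,4) by simp
  finally show ?thesis using lessThan_minus_last by simp
qed

lemma KS_top_face:
  assumes "KS p S s" "a \<in> s" "i \<in> S" "finite S" "0 < p" "\<forall>x\<in>s-{a}. x i = p"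
  shows "KS p (S - {i}) (s - {a})"
proof -
  obtain h where h: "bij h" "h ` S = {..<card S}" "h i = card S - 1"
    using ex_perm_last[OF assms(4,3)] by blast
  obtain s0 where s0: "ksimplex p (card S) s0" "s = (\<lambda>y. y \<circ> h) ` s0"
    using KS_any_h[of p S s h] assms(1) h(1,2) by auto
  obtain a0 where a0: "a0 \<in> s0" "a = a0 \<circ> h" using assms(2) s0(2) by blast
  have sa: "s - {a} = (\<lambda>y. y \<circ> h) ` (s0 - {a0})" using comp_h_diff[OF h(1)] s0(2) a0(2) by simp
  have "card S > 0" using assms(3,4) card_gt_0_iff by blast
  then have cS: "card S = Suc (card S - 1)" by simp
  have top: "\<forall>y\<in>s0 - {a0}. y (card S - 1) = p"
  proof
    fix y assume "y \<in> s0 - {a0}"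
    then have "y \<circ> h \<in> s - {a}" using sa by blast
    then have "(y \<circ> h) i = p" using assms(6) by blast
    then show "y (card S - 1) = p" using h(3) by simp
  qed
  have "\<exists>s a. ksimplex p (Suc (card S - 1)) s \<and> a \<in> s \<and> s0 - {a0} = s - {a}"
    using s0(1) a0(1) cS by (intro exI[of _ s0] exI[of _ a0]) simp
  then have k: "ksimplex p (card S - 1) (s0 - {a0})"
    using simplex_top_face[OF assms(5) top] by blast
  have cS': "card (S - {i}) = card S - 1" using assms(3,4) by simp
  have "h ` (S - {i}) = {..<card S - 1}" using img_minus_last[OF h cS] .
  then show ?thesis unfolding KS_def cS' using h(1) k sa by blast
qed

lemma KS_top_face_conv:
  assumes "KS p (S - {i}) f" "i \<in> S" "finite S" "0 < p"
  shows "\<exists>s a. KS p S s \<and> a \<in> s \<and> f = s - {a}"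
proof -
  obtain h where h: "bij h" "h ` S = {..<card S}" "h i = card S - 1"
    using ex_perm_last[OF assms(3,2)] by blast
  have "card S > 0" using assms(2,3) card_gt_0_iff by blast
  then have cS: "card S = Suc (card S - 1)" by simp
  have cS': "card (S - {i}) = card S - 1" using assms(2,3) by simp
  have hS': "h ` (S - {i}) = {..<card (S - {i})}" using img_minus_last[OF h cS] cS' by simp
  obtain f0 where f0: "ksimplex p (card S - 1) f0" "f = (\<lambda>y. y \<circ> h) ` f0"
    using KS_any_h[of p "S - {i}" f h] assms(1) h(1) hS' cS' by auto
  have top: "\<forall>y\<in>f0. y (card S - 1) = p"
  proof
    fix y assume y: "y \<in> f0"
    from f0(1) obtain b u where "kuhn_simplex p (card S - 1) b u f0" by (auto elim: ksimplex.cases)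
    then show "y (card S - 1) = p" using kuhn_simplex.out_eq_p y by blast
  qed
  have "\<exists>s a. ksimplex p (Suc (card S - 1)) s \<and> a \<in> s \<and> f0 = s - {a}"
    using simplex_top_face[OF assms(4) top] f0(1) by blast
  then obtain s0 a0 where s0: "ksimplex p (card S) s0" "a0 \<in> s0" "f0 = s0 - {a0}"
    using cS by auto
  have "KS p S ((\<lambda>y. y \<circ> h) ` s0)" unfolding KS_def using h(1,2) s0(1) by blast
  moreover have "f = (\<lambda>y. y \<circ> h) ` s0 - {a0 \<circ> h}" using f0(2) s0(3) comp_h_diff[OF h(1)] by simp
  ultimately show ?thesis using s0(2) by blast
qed

lemma even_invol:
  assumes "finite A" "\<forall>x\<in>A. g x \<in> A \<and> g (g x) = x \<and> g x \<noteq> x"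
  shows "even (card A)"
  using assms
proof (induction "card A" arbitrary: A rule: less_induct)
  case less
  show ?case
  proof (cases "A = {}")
    case True then show ?thesis by simp
  next
    case False
    then obtain x where x: "x \<in> A" by blast
    define B where "B = A - {x, g x}"
    have gx: "g x \<in> A" "g x \<noteq> x" using less.prems(2) x by blast+
    have sub: "{x, g x} \<subseteq> A" using x gx by blast
    have c2: "card {x, g x} = 2" using gx(2) by simp
    have "card B = card A - card {x, g x}" unfolding B_def using card_Diff_subset[OF _ sub] by simp
    moreover have "card A \<ge> 2" using card_mono[OF less.prems(1) sub] c2 by simp
    ultimately have cB: "card A = card B + 2" using c2 by simp
    have finB: "finite B" unfolding B_def using less.prems(1) by simp
    have invB: "\<forall>y\<in>B. g y \<in> B \<and> g (g y) = y \<and> g y \<noteq> y"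
    proof
      fix y assume y: "y \<in> B"
      then have yA: "y \<in> A" "y \<noteq> x" "y \<noteq> g x" unfolding B_def by auto
      have p: "g y \<in> A" "g (g y) = y" "g y \<noteq> y" using less.prems(2) yA(1) by blast+
      have gxx: "g (g x) = x" using less.prems(2) x by blast
      have "g y \<noteq> x" using p(2) yA(3) by metis
      moreover have "g y \<noteq> g x" using p(2) gxx yA(2) by metis
      ultimately have "g y \<in> B" unfolding B_def using p(1) by simp
      then show "g y \<in> B \<and> g (g y) = y \<and> g y \<noteq> y" using p by simp
    qed
    have "even (card B)" using less.hyps[OF _ finB invB] cB by simp
    then show ?thesis using cB by simp
  qed
qed

lemma img_remove_dup:
  assumes "a \<in> s" "b \<in> s" "a \<noteq> b" "rl a = rl b"
  shows "rl ` (s - {b}) = rl ` s"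
proof
  show "rl ` (s - {b}) \<subseteq> rl ` s" by auto
  show "rl ` s \<subseteq> rl ` (s - {b})"
  proof
    fix y assume "y \<in> rl ` s"
    then obtain x where x: "x \<in> s" "y = rl x" by blast
    show "y \<in> rl ` (s - {b})"
    proof (cases "x = b")
      case True
      then have "y = rl a" using x assms(4) by simp
      then show ?thesis using assms(1,3) by blast
    next
      case False then show ?thesis using x by blast
    qed
  qed
qed

lemma simplex_facet_count:
  fixes rl :: "'a \<Rightarrow> 'b"
  assumes s: "finite s" "card s = Suc k" and T: "card T = k"
  shows "(T \<subseteq> rl ` s \<and> inj_on rl s \<longrightarrow> card {a\<in>s. rl ` (s - {a}) = T} = 1) \<and>
     (\<not> (T \<subseteq> rl ` s \<and> inj_on rl s) \<longrightarrow> card {a\<in>s. rl ` (s - {a}) = T} = 0 \<or> card {a\<in>s. rl ` (s - {a}) = T} = 2)"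
proof (cases "T \<subseteq> rl ` s")
  case False
  then have "{a\<in>s. rl ` (s - {a}) = T} = {}" by auto
  then have "card {a\<in>s. rl ` (s - {a}) = T} = 0" by (simp only: card.empty)
  then show ?thesis using False by blast
next
  case sub: True
  show ?thesis
  proof (cases "inj_on rl s")
    case inj: True
    have "card (rl ` s) = Suc k" using inj s by (simp add: card_image)
    then have "rl ` s \<noteq> T" using T by auto
    then obtain a where a: "a \<in> s" "rl a \<notin> T" using sub by auto
    have "{b\<in>s. rl ` (s - {b}) = T} = {a}"
    proof (intro equalityI subsetI)
      fix b assume "b \<in> {b\<in>s. rl ` (s - {b}) = T}"
      then have b: "b \<in> s" "rl ` (s - {b}) = T" by auto
      show "b \<in> {a}"
      proof (rule ccontr)
        assume "b \<notin> {a}"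
        then have "rl a \<in> rl ` (s - {b})" using a by auto
        then show False using a b by simp
      qed
    next
      fix b assume "b \<in> {a}"
      then have ba: "b = a" by simp
      have "rl ` (s - {a}) = rl ` s - {rl a}" using inj a(1) by (simp add: inj_on_image_set_diff)
      moreover have "card (rl ` s - {rl a}) = k" using \<open>card (rl ` s) = Suc k\<close> a(1) by simp
      moreover have "T \<subseteq> rl ` s - {rl a}" using sub a(2) by auto
      ultimately have "T = rl ` (s - {a})"
        using T s(1) by (intro card_subset_eq) auto
      then have "rl ` (s - {a}) = T" by simp
      then show "b \<in> {b\<in>s. rl ` (s - {b}) = T}" using ba a(1) by simp
    qed
    then show ?thesis using sub inj by simp
  next
    case ninj: False
    have cl: "card (rl ` s) \<le> k"
    proof -
      have "card (rl ` s) \<noteq> card s" using ninj eq_card_imp_inj_on[OF s(1)] by blast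
      then have "card (rl ` s) < card s" using card_image_le[OF s(1), of rl] by simp
      then show ?thesis using s(2) by simp
    qed
    have "card T \<le> card (rl ` s)" using card_mono[OF finite_imageI[OF s(1)] sub] .
    then have "card T = card (rl ` s)" using cl T by simp
    then have "T = rl ` s" using card_subset_eq[OF finite_imageI[OF s(1)] sub] by simp
    then have rls: "rl ` s = T" by simp
    obtain a b where ab: "a \<in> s" "b \<in> s" "rl a = rl b" "a \<noteq> b"
      using ninj by (auto simp: inj_on_def)
    have eqa: "rl ` (s - {a}) = rl ` s" using img_remove_dup[of b s a rl] ab by simp
    have injsa: "inj_on rl (s - {a})"
    proof (rule eq_card_imp_inj_on)
      show "finite (s - {a})" using s(1) by simp
      show "card (rl ` (s - {a})) = card (s - {a})" using eqa rls T s ab(1) by simp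
    qed
    have "{x\<in>s. rl ` (s - {x}) = T} = {a, b}"
    proof (intro equalityI subsetI)
      fix x assume "x \<in> {x\<in>s. rl ` (s - {x}) = T}"
      then have x: "x \<in> s" "rl ` (s - {x}) = T" by auto
      show "x \<in> {a, b}"
      proof (rule ccontr)
        assume nx: "x \<notin> {a, b}"
        then have xs: "x \<in> s - {a}" using x(1) by simp
        have "rl x \<notin> rl ` ((s - {a}) - {x})" using injsa xs by (simp add: inj_on_image_set_diff)
        moreover have "rl ` (s - {x}) = rl ` ((s - {a}) - {x}) \<union> {rl a}"
        proof -
          have "s - {x} = ((s - {a}) - {x}) \<union> {a}" using nx ab(1) by auto
          then show ?thesis by auto
        qed
        moreover have "rl ` ((s - {a}) - {x}) \<union> {rl a} = rl ` ((s - {a}) - {x})"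
          using ab nx by auto
        ultimately have "rl x \<notin> rl ` (s - {x})" by simp
        moreover have "rl x \<in> T" using rls x(1) by auto
        ultimately show False using x(2) by simp
      qed
    next
      fix x assume "x \<in> {a, b}"
      moreover have "rl ` (s - {b}) = rl ` s" using img_remove_dup[of a s b rl] ab by simp
      ultimately show "x \<in> {x\<in>s. rl ` (s - {x}) = T}" using eqa rls ab(1,2) by auto
    qed
    then show ?thesis using ab(4) ninj by simp
  qed
qed

lemma parity_count:
  fixes Simps :: "'a set set" and rl :: "'a \<Rightarrow> 'b"
  assumes fin: "finite Simps" and cs: "\<And>s. s \<in> Simps \<Longrightarrow> card s = Suc k" and T: "card T = k"
    and pm: "\<And>s a. s \<in> Simps \<Longrightarrow> a \<in> s \<Longrightarrow> card {t\<in>Simps. \<exists>b\<in>t. t - {b} = s - {a}} = (if bnd (s - {a}) then 1 else 2)"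
  shows "even (card {s\<in>Simps. T \<subseteq> rl ` s \<and> inj_on rl s} + card {f. (\<exists>s\<in>Simps. \<exists>a\<in>s. f = s - {a}) \<and> bnd f \<and> rl ` f = T})"
proof -
  have fins: "finite s" if "s \<in> Simps" for s
  proof (rule ccontr)
    assume "infinite s" then have "card s = 0" by simp
    then show False using cs[OF that] by simp
  qed
  define F where "F = {f. \<exists>s\<in>Simps. \<exists>a\<in>s. f = s - {a}}"
  have finF: "finite F"
  proof -
    have "F = (\<Union>s\<in>Simps. (\<lambda>a. s - {a}) ` s)" unfolding F_def by blast
    then show ?thesis using fin fins by simp
  qed
  define face where "face f s \<longleftrightarrow> (\<exists>a\<in>s. f = s - {a})" for f s :: "'a set"
  define B1 where "B1 = {f\<in>F. rl ` f = T \<and> bnd f}"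
  define B2 where "B2 = {f\<in>F. rl ` f = T \<and> \<not> bnd f}"
  define nF where "nF s = card {f\<in>F. face f s \<and> rl ` f = T}" for s :: "'a set"
  have nF_eq: "nF s = card {a\<in>s. rl ` (s - {a}) = T}" if "s \<in> Simps" for s
  proof -
    have "{f\<in>F. face f s \<and> rl ` f = T} = (\<lambda>a. s - {a}) ` {a\<in>s. rl ` (s - {a}) = T}"
      unfolding F_def face_def using that by blast
    moreover have "inj_on (\<lambda>a. s - {a}) s" by (auto simp: inj_on_def)
    ultimately show ?thesis unfolding nF_def by (simp add: card_image inj_on_subset)
  qed
  have nF_split: "nF s = card {f\<in>B1. face f s} + card {f\<in>B2. face f s}" for s
  proof -
    have "{f\<in>F. face f s \<and> rl ` f = T} = {f\<in>B1. face f s} \<union> {f\<in>B2. face f s}"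
      unfolding B1_def B2_def by blast
    moreover have "{f\<in>B1. face f s} \<inter> {f\<in>B2. face f s} = {}" unfolding B1_def B2_def by blast
    moreover have "finite {f\<in>B1. face f s}" "finite {f\<in>B2. face f s}"
      unfolding B1_def B2_def using finF by auto
    ultimately show ?thesis unfolding nF_def by (simp add: card_Un_disjoint)
  qed
  have cnt: "card {t\<in>Simps. face f t} = (if bnd f then 1 else 2)" if fF: "f \<in> F" for f
  proof -
    obtain s0 a0 where s0: "s0 \<in> Simps" "a0 \<in> s0" "f = s0 - {a0}" using fF unfolding F_def by blast
    have "{t\<in>Simps. face f t} = {t\<in>Simps. \<exists>b\<in>t. t - {b} = s0 - {a0}}"
      unfolding face_def using s0(3) by blast
    then show ?thesis using pm[OF s0(1,2)] s0(3) by simp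
  qed
  have "(\<Sum>s\<in>Simps. nF s) = (\<Sum>s\<in>Simps. card {f\<in>B1. face f s}) + (\<Sum>s\<in>Simps. card {f\<in>B2. face f s})"
    unfolding nF_split by (simp add: sum.distrib)
  also have "(\<Sum>s\<in>Simps. card {f\<in>B1. face f s}) = 1 * card B1"
  proof (rule sum_multicount[OF fin])
    show "finite B1" unfolding B1_def using finF by simp
    show "\<forall>f\<in>B1. card {s \<in> Simps. face f s} = 1" using cnt unfolding B1_def by simp
  qed
  also have "(\<Sum>s\<in>Simps. card {f\<in>B2. face f s}) = 2 * card B2"
  proof (rule sum_multicount[OF fin])
    show "finite B2" unfolding B2_def using finF by simp
    show "\<forall>f\<in>B2. card {s \<in> Simps. face f s} = 2" using cnt unfolding B2_def by simp
  qed
  finally have e1: "(\<Sum>s\<in>Simps. nF s) = card B1 + 2 * card B2" by simp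
  define NH where "NH = {s\<in>Simps. T \<subseteq> rl ` s \<and> inj_on rl s}"
  have NHs: "NH \<subseteq> Simps" unfolding NH_def by blast
  have "(\<Sum>s\<in>Simps. nF s) = (\<Sum>s\<in>NH. nF s) + (\<Sum>s\<in>Simps - NH. nF s)"
    using sum.subset_diff[OF NHs fin, of nF] by simp
  also have "(\<Sum>s\<in>NH. nF s) = card NH"
  proof -
    have "(\<Sum>s\<in>NH. nF s) = (\<Sum>s\<in>NH. 1)"
    proof (rule sum.cong[OF refl])
      fix s assume s: "s \<in> NH"
      then have sS: "s \<in> Simps" unfolding NH_def by simp
      have "T \<subseteq> rl ` s \<and> inj_on rl s" using s unfolding NH_def by simp
      then show "nF s = 1" using simplex_facet_count[OF fins[OF sS] cs[OF sS] T, of rl] nF_eq[OF sS] by simp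
    qed
    then show ?thesis by simp
  qed
  finally have e2: "(\<Sum>s\<in>Simps. nF s) = card NH + (\<Sum>s\<in>Simps - NH. nF s)" .
  have ev: "even (\<Sum>s\<in>Simps - NH. nF s)"
  proof (rule dvd_sum)
    fix s assume s: "s \<in> Simps - NH"
    then have sS: "s \<in> Simps" by simp
    have "\<not> (T \<subseteq> rl ` s \<and> inj_on rl s)" using s unfolding NH_def by simp
    then have "nF s = 0 \<or> nF s = 2" using simplex_facet_count[OF fins[OF sS] cs[OF sS] T, of rl] nF_eq[OF sS] by simp
    then show "even (nF s)" by auto
  qed
  have "even (card NH + card B1)"
  proof -
    have "card NH + (\<Sum>s\<in>Simps - NH. nF s) + card B1 = 2 * (card B1 + card B2)" using e1 e2 by simp
    then have "even (card NH + card B1 + (\<Sum>s\<in>Simps - NH. nF s))" by (simp add: ac_simps)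
    then show ?thesis using ev by simp
  qed
  moreover have "B1 = {f. (\<exists>s\<in>Simps. \<exists>a\<in>s. f = s - {a}) \<and> bnd f \<and> rl ` f = T}"
    unfolding B1_def F_def by blast
  ultimately show ?thesis unfolding NH_def by simp
qed

definition sv :: "nat \<Rightarrow> (nat \<Rightarrow> int) \<Rightarrow> bool" where
  "sv d \<epsilon> \<longleftrightarrow> (\<forall>i. \<epsilon> i \<in> {-1,0,1}) \<and> (\<forall>i\<ge>d. \<epsilon> i = 0)"

definition spt :: "(nat \<Rightarrow> int) \<Rightarrow> nat set" where
  "spt \<epsilon> = {i. \<epsilon> i \<noteq> 0}"

definition emb :: "nat \<Rightarrow> (nat \<Rightarrow> int) \<Rightarrow> (nat \<Rightarrow> nat) \<Rightarrow> (nat \<Rightarrow> int)" where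
  "emb p \<epsilon> w = (\<lambda>i. \<epsilon> i * (int p - int (w i)))"

definition Sset :: "(nat \<Rightarrow> int) \<Rightarrow> int set" where
  "Sset \<epsilon> = (\<lambda>i. \<epsilon> i * int (Suc i)) ` spt \<epsilon>"

lemma sv_spt: "sv d \<epsilon> \<Longrightarrow> spt \<epsilon> \<subseteq> {..<d}"
  unfolding sv_def spt_def by (auto simp: not_less[symmetric])

lemma sv_finite: "sv d \<epsilon> \<Longrightarrow> finite (spt \<epsilon>)"
  using sv_spt finite_subset by blast

lemma sv_val: "sv d \<epsilon> \<Longrightarrow> \<epsilon> i \<noteq> 0 \<Longrightarrow> \<epsilon> i = 1 \<or> \<epsilon> i = -1"
  unfolding sv_def by auto

lemma sv_abs: "sv d \<epsilon> \<Longrightarrow> \<epsilon> i \<noteq> 0 \<Longrightarrow> \<bar>\<epsilon> i * c\<bar> = \<bar>c\<bar>"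
  using sv_val[of d \<epsilon> i] by (auto simp: abs_mult)

lemma Sset_card: assumes "sv d \<epsilon>" shows "card (Sset \<epsilon>) = card (spt \<epsilon>)"
proof -
  have "inj_on (\<lambda>i. \<epsilon> i * int (Suc i)) (spt \<epsilon>)"
  proof (rule inj_onI)
    fix i j assume ij: "i \<in> spt \<epsilon>" "j \<in> spt \<epsilon>" "\<epsilon> i * int (Suc i) = \<epsilon> j * int (Suc j)"
    then have "\<bar>\<epsilon> i * int (Suc i)\<bar> = \<bar>\<epsilon> j * int (Suc j)\<bar>" by simp
    then have "int (Suc i) = int (Suc j)" using sv_abs[OF assms, of i] sv_abs[OF assms, of j] ij(1,2)
      unfolding spt_def by simp
    then show "i = j" by simp
  qed
  then show ?thesis unfolding Sset_def by (simp add: card_image)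
qed

lemma Sset_mem: "sv d \<epsilon> \<Longrightarrow> l \<in> Sset \<epsilon> \<longleftrightarrow> (\<exists>i. \<epsilon> i \<noteq> 0 \<and> l = \<epsilon> i * int (Suc i))"
  unfolding Sset_def spt_def by auto

lemma Sset_inj:
  assumes "sv d \<epsilon>1" "sv d \<epsilon>2" "Sset \<epsilon>1 = Sset \<epsilon>2"
  shows "\<epsilon>1 = \<epsilon>2"
proof
  fix i
  have key: "\<epsilon>a i \<noteq> 0 \<Longrightarrow> \<epsilon>b i = \<epsilon>a i" if a: "sv d \<epsilon>a" "sv d \<epsilon>b" "Sset \<epsilon>a = Sset \<epsilon>b" for \<epsilon>a \<epsilon>b
  proof -
    assume nz: "\<epsilon>a i \<noteq> 0"
    then have "\<epsilon>a i * int (Suc i) \<in> Sset \<epsilon>b" using a(3) Sset_mem[OF a(1)] by auto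
    then obtain j where j: "\<epsilon>b j \<noteq> 0" "\<epsilon>a i * int (Suc i) = \<epsilon>b j * int (Suc j)" using Sset_mem[OF a(2)] by auto
    then have "\<bar>\<epsilon>a i * int (Suc i)\<bar> = \<bar>\<epsilon>b j * int (Suc j)\<bar>" by simp
    then have "int (Suc i) = int (Suc j)" using sv_abs[OF a(1) nz] sv_abs[OF a(2) j(1)] by simp
    then have "i = j" by simp
    then show "\<epsilon>b i = \<epsilon>a i" using j(2) by simp
  qed
  show "\<epsilon>1 i = \<epsilon>2 i"
  proof (cases "\<epsilon>1 i = 0")
    case True
    show ?thesis
    proof (cases "\<epsilon>2 i = 0")
      case True then show ?thesis using \<open>\<epsilon>1 i = 0\<close> by simp
    next
      case False then show ?thesis using key[OF assms(2,1) assms(3)[symmetric]] by simp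
    qed
  next
    case False then show ?thesis using key[OF assms(1,2,3)] by simp
  qed
qed

lemma sv_set_finite: "finite {\<epsilon>. sv d \<epsilon>}"
proof -
  have "{\<epsilon>. sv d \<epsilon>} \<subseteq> (\<lambda>f i. if i < d then f i else 0) ` ({..<d} \<rightarrow>\<^sub>E {-1,0,1::int})"
  proof
    fix \<epsilon> assume e: "\<epsilon> \<in> {\<epsilon>. sv d \<epsilon>}"
    have "restrict \<epsilon> {..<d} \<in> {..<d} \<rightarrow>\<^sub>E {-1,0,1}" using e unfolding sv_def by auto
    moreover have "\<epsilon> = (\<lambda>i. if i < d then restrict \<epsilon> {..<d} i else 0)"
      using e unfolding sv_def by (auto simp: fun_eq_iff)
    ultimately show "\<epsilon> \<in> (\<lambda>f i. if i < d then f i else 0) ` ({..<d} \<rightarrow>\<^sub>E {-1,0,1})" by blast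
  qed
  then show ?thesis by (rule finite_subset) (simp add: finite_PiE)
qed

lemma emb_neg: "emb p (\<lambda>i. - \<epsilon> i) w = - emb p \<epsilon> w"
  unfolding emb_def by (simp add: fun_eq_iff)

lemma emb_upd_p: "w j = p \<Longrightarrow> emb p (\<epsilon>(j := c)) w = emb p \<epsilon> w"
  unfolding emb_def by (simp add: fun_eq_iff)

lemma sv_neg: "sv d \<epsilon> \<Longrightarrow> sv d (\<lambda>i. - \<epsilon> i)"
  unfolding sv_def by auto

lemma spt_neg: "spt (\<lambda>i. - \<epsilon> i) = spt \<epsilon>"
  unfolding spt_def by auto

lemma Sset_neg: "Sset (\<lambda>i. - \<epsilon> i) = uminus ` Sset \<epsilon>"
  unfolding Sset_def spt_neg by (auto simp: image_image)

locale tuck =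
  fixes d p :: nat and lam :: "(nat \<Rightarrow> int) \<Rightarrow> int"
  assumes d1: "1 \<le> d" and p0: "0 < p"
  and rng: "\<And>\<epsilon> s w. sv d \<epsilon> \<Longrightarrow> KS p (spt \<epsilon>) s \<Longrightarrow> w \<in> s \<Longrightarrow> 1 \<le> \<bar>lam (emb p \<epsilon> w)\<bar> \<and> \<bar>lam (emb p \<epsilon> w)\<bar> \<le> int d"
  and anti: "\<And>\<epsilon> s w j. sv d \<epsilon> \<Longrightarrow> KS p (spt \<epsilon>) s \<Longrightarrow> w \<in> s \<Longrightarrow> \<epsilon> j \<noteq> 0 \<Longrightarrow> w j = 0 \<Longrightarrow> lam (- emb p \<epsilon> w) = - lam (emb p \<epsilon> w)"
  and nc: "\<And>\<epsilon> s u v. sv d \<epsilon> \<Longrightarrow> KS p (spt \<epsilon>) s \<Longrightarrow> u \<in> s \<Longrightarrow> v \<in> s \<Longrightarrow> lam (emb p \<epsilon> u) \<noteq> - lam (emb p \<epsilon> v)"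
begin

definition lab where "lab \<epsilon> w = lam (emb p \<epsilon> w)"
definition E where "E k = {\<epsilon>. sv d \<epsilon> \<and> card (spt \<epsilon>) = k}"
definition NHs where "NHs \<epsilon> = {s. KS p (spt \<epsilon>) s \<and> Sset \<epsilon> \<subseteq> lab \<epsilon> ` s \<and> inj_on (lab \<epsilon>) s}"
definition Fac where "Fac \<epsilon> = {f. \<exists>s. KS p (spt \<epsilon>) s \<and> (\<exists>a\<in>s. f = s - {a})}"
definition Inn where "Inn \<epsilon> = {f\<in>Fac \<epsilon>. (\<exists>j\<in>spt \<epsilon>. \<forall>x\<in>f. x j = p) \<and> lab \<epsilon> ` f = Sset \<epsilon>}"
definition Out where "Out \<epsilon> = {f\<in>Fac \<epsilon>. (\<exists>j\<in>spt \<epsilon>. \<forall>x\<in>f. x j = 0) \<and> lab \<epsilon> ` f = Sset \<epsilon>}"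
definition P where "P k = Sigma (E k) NHs"
definition IF where "IF k = Sigma (E k) Inn"
definition OF where "OF k = Sigma (E k) Out"

lemma E_finite: "finite (E k)"
  unfolding E_def using sv_set_finite[of d] by (rule finite_subset[rotated]) auto

lemma KSe_finite: "sv d \<epsilon> \<Longrightarrow> finite {s. KS p (spt \<epsilon>) s}"
  using KS_finite sv_finite by blast

lemma Fac_finite: assumes "sv d \<epsilon>" shows "finite (Fac \<epsilon>)"
proof -
  have "Fac \<epsilon> = (\<Union>s\<in>{s. KS p (spt \<epsilon>) s}. (\<lambda>a. s - {a}) ` s)" unfolding Fac_def by blast
  moreover have "finite s" if "KS p (spt \<epsilon>) s" for s
  proof (rule ccontr)
    assume "infinite s" then have "card s = 0" by simp
    then show False using KS_card[OF that] by simp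
  qed
  ultimately show ?thesis using KSe_finite[OF assms] by simp
qed

lemma Fac_KS:
  assumes "sv d \<epsilon>" "f \<in> Fac \<epsilon>" "j \<in> spt \<epsilon>" "\<forall>x\<in>f. x j = p"
  shows "KS p (spt \<epsilon> - {j}) f"
proof -
  obtain s a where s: "KS p (spt \<epsilon>) s" "a \<in> s" "f = s - {a}" using assms(2) unfolding Fac_def by blast
  show ?thesis using KS_top_face[OF s(1,2) assms(3) sv_finite[OF assms(1)] p0] assms(4) s(3) by simp
qed

lemma inner_outer_disj:
  assumes "sv d \<epsilon>" "f \<in> Fac \<epsilon>" "j \<in> spt \<epsilon>" "\<forall>x\<in>f. x j = p" "j' \<in> spt \<epsilon>" "\<forall>x\<in>f. x j' = 0"
  shows False
proof -
  have k: "KS p (spt \<epsilon> - {j}) f" using Fac_KS[OF assms(1-4)] .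
  show False
  proof (cases "j' = j")
    case True
    have "card f = Suc (card (spt \<epsilon> - {j}))" using KS_card[OF k] .
    have "f \<noteq> {}"
    proof
      assume "f = {}" then show False using \<open>card f = Suc (card (spt \<epsilon> - {j}))\<close> by simp
    qed
    then obtain x where x: "x \<in> f" by blast
    have "x j = p" using assms(4) x by blast
    moreover have "x j = 0" using assms(6) x True by blast
    ultimately show False using p0 by simp
  next
    case False
    obtain x where x: "x \<in> f" "\<forall>i\<in>spt \<epsilon> - {j}. 0 < x i" using KS_top[OF k] by blast
    have "j' \<in> spt \<epsilon> - {j}" using assms(5) False by blast
    then have "0 < x j'" using x(2) by blast
    moreover have "x j' = 0" using assms(6) x(1) by blast
    ultimately show False by simp
  qed
qed

end

context tuck begin

lemma level_parity:
  assumes "1 \<le> k"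
  shows "even (card (P k) + card (IF k) + card (OF k))"
proof -
  have per: "even (card (NHs \<epsilon>) + card (Inn \<epsilon>) + card (Out \<epsilon>))" if e: "\<epsilon> \<in> E k" for \<epsilon>
  proof -
    have sv: "sv d \<epsilon>" and ck: "card (spt \<epsilon>) = k" using e unfolding E_def by auto
    have ne: "spt \<epsilon> \<noteq> {}" using ck assms by auto
    define bnd where "bnd f \<longleftrightarrow> (\<exists>j\<in>spt \<epsilon>. \<forall>x\<in>f. x j = 0) \<or> (\<exists>j\<in>spt \<epsilon>. \<forall>x\<in>f. x j = p)" for f :: "(nat \<Rightarrow> nat) set"
    have pc: "even (card {s\<in>{s. KS p (spt \<epsilon>) s}. Sset \<epsilon> \<subseteq> lab \<epsilon> ` s \<and> inj_on (lab \<epsilon>) s} +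
        card {f. (\<exists>s\<in>{s. KS p (spt \<epsilon>) s}. \<exists>a\<in>s. f = s - {a}) \<and> bnd f \<and> lab \<epsilon> ` f = Sset \<epsilon>})"
    proof (rule parity_count[where k = k])
      show "finite {s. KS p (spt \<epsilon>) s}" using KSe_finite[OF sv] .
      show "\<And>s. s \<in> {s. KS p (spt \<epsilon>) s} \<Longrightarrow> card s = Suc k" using KS_card ck by auto
      show "card (Sset \<epsilon>) = k" using Sset_card[OF sv] ck by simp
      show "\<And>s a. s \<in> {s. KS p (spt \<epsilon>) s} \<Longrightarrow> a \<in> s \<Longrightarrow>
         card {t \<in> {s. KS p (spt \<epsilon>) s}. \<exists>b\<in>t. t - {b} = s - {a}} = (if bnd (s - {a}) then 1 else 2)"
        using KS_replace[OF _ _ ne sv_finite[OF sv]] unfolding bnd_def by simp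
    qed
    have e1: "{s\<in>{s. KS p (spt \<epsilon>) s}. Sset \<epsilon> \<subseteq> lab \<epsilon> ` s \<and> inj_on (lab \<epsilon>) s} = NHs \<epsilon>"
      unfolding NHs_def by simp
    have e2: "{f. (\<exists>s\<in>{s. KS p (spt \<epsilon>) s}. \<exists>a\<in>s. f = s - {a}) \<and> bnd f \<and> lab \<epsilon> ` f = Sset \<epsilon>} = Inn \<epsilon> \<union> Out \<epsilon>"
    proof -
      have "(\<exists>s\<in>{s. KS p (spt \<epsilon>) s}. \<exists>a\<in>s. f = s - {a}) \<longleftrightarrow> f \<in> Fac \<epsilon>" for f
        unfolding Fac_def by simp
      then show ?thesis unfolding Inn_def Out_def bnd_def by auto
    qed
    have e3: "Inn \<epsilon> \<inter> Out \<epsilon> = {}"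
    proof (rule ccontr)
      assume "Inn \<epsilon> \<inter> Out \<epsilon> \<noteq> {}"
      then obtain f where f: "f \<in> Inn \<epsilon>" "f \<in> Out \<epsilon>" by blast
        have "f \<in> Fac \<epsilon>" using f(1) unfolding Inn_def by simp
      moreover obtain j where "j \<in> spt \<epsilon>" "\<forall>x\<in>f. x j = p" using f(1) unfolding Inn_def by blast
      moreover obtain j' where "j' \<in> spt \<epsilon>" "\<forall>x\<in>f. x j' = 0" using f(2) unfolding Out_def by blast
      ultimately show False using inner_outer_disj[OF sv] by metis
    qed
    have fin: "finite (Inn \<epsilon>)" "finite (Out \<epsilon>)" unfolding Inn_def Out_def using Fac_finite[OF sv] by auto
    have "card (Inn \<epsilon> \<union> Out \<epsilon>) = card (Inn \<epsilon>) + card (Out \<epsilon>)" using card_Un_disjoint[OF fin e3] .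
    then show ?thesis using pc e1 e2 by (simp add: add.assoc)
  qed
  have finN: "finite (NHs \<epsilon>)" if "\<epsilon> \<in> E k" for \<epsilon>
  proof -
    have "sv d \<epsilon>" using that unfolding E_def by simp
    then have "finite {s. KS p (spt \<epsilon>) s}" by (rule KSe_finite)
    moreover have "NHs \<epsilon> \<subseteq> {s. KS p (spt \<epsilon>) s}" unfolding NHs_def by blast
    ultimately show ?thesis by (rule finite_subset[rotated])
  qed
  have finI: "finite (Inn \<epsilon>)" "finite (Out \<epsilon>)" if "\<epsilon> \<in> E k" for \<epsilon>
  proof -
    have "sv d \<epsilon>" using that unfolding E_def by simp
    then have "finite (Fac \<epsilon>)" by (rule Fac_finite)
    then show "finite (Inn \<epsilon>)" "finite (Out \<epsilon>)" unfolding Inn_def Out_def by simp_all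
  qed
  have "card (P k) + card (IF k) + card (OF k) = (\<Sum>\<epsilon>\<in>E k. card (NHs \<epsilon>) + card (Inn \<epsilon>) + card (Out \<epsilon>))"
    unfolding P_def IF_def OF_def using E_finite[of k] finN finI by (simp add: card_SigmaI sum.distrib)
  moreover have "even (\<Sum>\<epsilon>\<in>E k. card (NHs \<epsilon>) + card (Inn \<epsilon>) + card (Out \<epsilon>))"
    using per by (intro dvd_sum) auto
  ultimately show ?thesis by simp
qed

end

context tuck begin

lemma KS_fin: "KS p S s \<Longrightarrow> finite s"
proof (rule ccontr)
  assume "KS p S s" "infinite s" then show False using KS_card[of p S s] by simp
qed

lemma new_label:
  assumes sv: "sv d \<epsilon>" and s: "KS p (spt \<epsilon>) s" and u: "u \<in> s" and l: "lab \<epsilon> u \<notin> Sset \<epsilon>"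
    and sub: "Sset \<epsilon> \<subseteq> lab \<epsilon> ` s"
  shows "\<epsilon> (nat \<bar>lab \<epsilon> u\<bar> - 1) = 0 \<and> nat \<bar>lab \<epsilon> u\<bar> - 1 < d"
proof -
  define l where "l = lab \<epsilon> u"
  have r: "1 \<le> \<bar>l\<bar>" "\<bar>l\<bar> \<le> int d" using rng[OF sv s u] unfolding l_def lab_def by auto
  define i where "i = nat \<bar>l\<bar> - 1"
  have n1: "0 < nat \<bar>l\<bar>" using r(1) by simp
  have si: "Suc i = nat \<bar>l\<bar>" unfolding i_def using n1 by simp
  have il: "int (Suc i) = \<bar>l\<bar>" unfolding si by simp
  have "int (Suc i) \<le> int d" using il r(2) by simp
  then have id: "i < d" by simp
  have "\<epsilon> i = 0"
  proof (rule ccontr)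
    assume nz: "\<epsilon> i \<noteq> 0"
    have m: "\<epsilon> i * int (Suc i) \<in> Sset \<epsilon>" unfolding Sset_def
      by (rule imageI) (simp add: spt_def nz)
    have "\<epsilon> i * int (Suc i) \<in> lab \<epsilon> ` s" using m sub by (rule subsetD[rotated])
    then obtain v where v: "v \<in> s" "lab \<epsilon> v = \<epsilon> i * int (Suc i)" by (rule imageE) simp
    have "l \<noteq> \<epsilon> i * int (Suc i)"
    proof
      assume "l = \<epsilon> i * int (Suc i)"
      then have "lab \<epsilon> u \<in> Sset \<epsilon>" using m unfolding l_def by simp
      then show False using l by simp
    qed
    moreover have "l = int (Suc i) \<or> l = - int (Suc i)" using il by linarith
    moreover have "\<epsilon> i = 1 \<or> \<epsilon> i = -1" using sv_val[OF sv nz] .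
    ultimately have "l = - (\<epsilon> i * int (Suc i))" by (elim disjE) simp_all
    then have "lab \<epsilon> u = - lab \<epsilon> v" using v(2) unfolding l_def by simp
    then show False using nc[OF sv s u v(1)] unfolding lab_def by simp
  qed
  then show ?thesis using id unfolding i_def l_def by simp
qed

lemma exists_new_label:
  assumes "finite s" "card s > card T" "inj_on g s" "finite T"
  shows "\<exists>u\<in>s. g u \<notin> T"
proof (rule ccontr)
  assume "\<not> (\<exists>u\<in>s. g u \<notin> T)"
  then have sub: "g ` s \<subseteq> T" by blast
  have cg: "card (g ` s) = card s" using assms(3) by (simp add: card_image)
  have fT: "finite T" using assms(4) .
  have "card (g ` s) \<le> card T" using card_mono[OF fT sub] .
  then show False using cg assms(2) by simp
qed

lemma P_d_empty: "P d = {}"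
proof (rule ccontr)
  assume "P d \<noteq> {}"
  then obtain \<epsilon> s where es: "\<epsilon> \<in> E d" "s \<in> NHs \<epsilon>" unfolding P_def by blast
  have sv: "sv d \<epsilon>" and cd: "card (spt \<epsilon>) = d" using es(1) unfolding E_def by auto
  have s: "KS p (spt \<epsilon>) s" "Sset \<epsilon> \<subseteq> lab \<epsilon> ` s" "inj_on (lab \<epsilon>) s" using es(2) unfolding NHs_def by auto
  have "card s > card (Sset \<epsilon>)" using KS_card[OF s(1)] Sset_card[OF sv] by simp
  then obtain u where u: "u \<in> s" "lab \<epsilon> u \<notin> Sset \<epsilon>" using exists_new_label[OF KS_fin[OF s(1)] _ s(3)] sv_finite[OF sv] unfolding Sset_def by blast
  define i where "i = nat \<bar>lab \<epsilon> u\<bar> - 1"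
  have "\<epsilon> i = 0" "i < d" using new_label[OF sv s(1) u s(2)] unfolding i_def by auto
  moreover have "spt \<epsilon> = {..<d}" using card_subset_eq[OF _ sv_spt[OF sv]] cd by simp
  ultimately have "i \<in> spt \<epsilon>" "\<epsilon> i = 0" by auto
  then show False unfolding spt_def by simp
qed

lemma P_0: "card (P 0) = 1"
proof -
  have E0: "E 0 = {\<lambda>_. 0}"
  proof (intro equalityI subsetI)
    fix \<epsilon> assume "\<epsilon> \<in> E 0"
    then have "sv d \<epsilon>" "card (spt \<epsilon>) = 0" unfolding E_def by auto
    then have "spt \<epsilon> = {}" using sv_finite by simp
    then have "\<epsilon> = (\<lambda>_. 0)" unfolding spt_def by (simp add: fun_eq_iff)
    then show "\<epsilon> \<in> {\<lambda>_. 0}" by simp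
  next
    fix \<epsilon> :: "nat \<Rightarrow> int" assume "\<epsilon> \<in> {\<lambda>_. 0}"
    then have "\<epsilon> = (\<lambda>_. 0)" by simp
    moreover have "sv d (\<lambda>_. 0)" unfolding sv_def by simp
    moreover have "card (spt (\<lambda>_. 0 :: int)) = 0" unfolding spt_def by simp
    ultimately show "\<epsilon> \<in> E 0" unfolding E_def by simp
  qed
  have KS0: "KS p {} s \<longleftrightarrow> s = {\<lambda>_. p}" for s
  proof
    assume "KS p {} s"
    then obtain h s0 where "ksimplex p 0 s0" "s = (\<lambda>y. y \<circ> h) ` s0" unfolding KS_def by auto
    then show "s = {\<lambda>_. p}" using ksimplex_0 by (simp add: o_def)
  next
    assume "s = {\<lambda>_. p}"
    moreover have "bij (id :: nat \<Rightarrow> nat)" by simp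
    moreover have "ksimplex p 0 {\<lambda>_. p}" using ksimplex_0 by simp
    ultimately show "KS p {} s" unfolding KS_def by (intro exI[of _ id] exI[of _ "{\<lambda>_. p}"]) simp
  qed
  have spt0: "spt (\<lambda>_. 0 :: int) = {}" unfolding spt_def by simp
  have S0: "Sset (\<lambda>_. 0 :: int) = {}" unfolding Sset_def spt0 by simp
  have "NHs (\<lambda>_. 0) = {{\<lambda>_. p}}"
    unfolding NHs_def spt0 KS0 S0 by auto
  then have "P 0 = {(\<lambda>_. 0, {\<lambda>_. p})}" unfolding P_def E0 by auto
  then show ?thesis by simp
qed

end

context tuck begin

lemma lab_upd: "w j = p \<Longrightarrow> lab (\<epsilon>(j := c)) w = lab \<epsilon> w"
  unfolding lab_def using emb_upd_p by metis

lemma OF_finite: "finite (OF k)"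
proof -
  have "\<forall>\<epsilon>\<in>E k. finite (Out \<epsilon>)"
  proof
    fix \<epsilon> assume "\<epsilon> \<in> E k"
    then have "sv d \<epsilon>" unfolding E_def by simp
    then have "finite (Fac \<epsilon>)" by (rule Fac_finite)
    then show "finite (Out \<epsilon>)" unfolding Out_def by simp
  qed
  then show ?thesis unfolding OF_def using E_finite[of k] by (intro finite_SigmaI) auto
qed

lemma OF_even:
  assumes "1 \<le> k" shows "even (card (OF k))"
proof -
  define g where "g = (\<lambda>(\<epsilon>::nat\<Rightarrow>int, f::(nat\<Rightarrow>nat) set). ((\<lambda>i. - \<epsilon> i), f))"
  have props: "\<forall>x\<in>OF k. g x \<in> OF k \<and> g (g x) = x \<and> g x \<noteq> x"
  proof
    fix x assume x: "x \<in> OF k"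
    obtain \<epsilon> f where xe: "x = (\<epsilon>, f)" by (cases x)
    have e: "\<epsilon> \<in> E k" "f \<in> Out \<epsilon>" using x xe unfolding OF_def by auto
    have sv: "sv d \<epsilon>" and ck: "card (spt \<epsilon>) = k" using e(1) unfolding E_def by auto
    have fF: "f \<in> Fac \<epsilon>" and lf: "lab \<epsilon> ` f = Sset \<epsilon>" using e(2) unfolding Out_def by auto
    obtain j where j: "j \<in> spt \<epsilon>" "\<forall>y\<in>f. y j = 0" using e(2) unfolding Out_def by blast
    obtain s a where s: "KS p (spt \<epsilon>) s" "a \<in> s" "f = s - {a}" using fF unfolding Fac_def by blast
    define \<epsilon>n where "\<epsilon>n = (\<lambda>i. - \<epsilon> i)"
    have svn: "sv d \<epsilon>n" unfolding \<epsilon>n_def using sv_neg[OF sv] .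
    have sptn: "spt \<epsilon>n = spt \<epsilon>" unfolding \<epsilon>n_def by (rule spt_neg)
    have "\<epsilon>n \<in> E k" unfolding E_def using svn sptn ck by simp
    moreover have "f \<in> Fac \<epsilon>n" using fF unfolding Fac_def sptn .
    moreover have "j \<in> spt \<epsilon>n" using j(1) sptn by simp
    moreover have "lab \<epsilon>n ` f = Sset \<epsilon>n"
    proof -
      have lw: "lab \<epsilon>n w = - lab \<epsilon> w" if w: "w \<in> f" for w
      proof -
        have ws: "w \<in> s" using w s(3) by simp
        have "\<epsilon> j \<noteq> 0" using j(1) unfolding spt_def by simp
        moreover have "w j = 0" using j(2) w by simp
        ultimately have "lam (- emb p \<epsilon> w) = - lam (emb p \<epsilon> w)" using anti[OF sv s(1) ws] by blast
        then show ?thesis unfolding lab_def \<epsilon>n_def emb_neg by simp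
      qed
      have "lab \<epsilon>n ` f = uminus ` (lab \<epsilon> ` f)"
      proof -
        have "lab \<epsilon>n ` f = (\<lambda>w. - lab \<epsilon> w) ` f" using lw by (rule image_cong[OF refl])
        then show ?thesis by (simp add: image_image)
      qed
      then show ?thesis using lf Sset_neg unfolding \<epsilon>n_def by simp
    qed
    ultimately have "(\<epsilon>n, f) \<in> OF k" using j(2) unfolding OF_def Out_def by blast
    moreover have "g x = (\<epsilon>n, f)" unfolding g_def xe \<epsilon>n_def by simp
    moreover have "g (g x) = x" unfolding g_def xe by simp
    moreover have "\<epsilon>n \<noteq> \<epsilon>"
    proof
      assume "\<epsilon>n = \<epsilon>"
      then have "- \<epsilon> j = \<epsilon> j" unfolding \<epsilon>n_def by (metis)
      then show False using j(1) unfolding spt_def by simp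
    qed
    ultimately show "g x \<in> OF k \<and> g (g x) = x \<and> g x \<noteq> x" using xe by auto
  qed
  show ?thesis using even_invol[OF OF_finite props] .
qed

end

context tuck begin

definition zo where "zo \<epsilon> f = (\<lambda>j'. if \<forall>x\<in>f. x j' = p then 0 else \<epsilon> j')"

lemma zo_eq:
  assumes "sv d \<epsilon>" "j \<in> spt \<epsilon>" "\<forall>x\<in>f. x j = p" "KS p (spt \<epsilon> - {j}) f"
  shows "zo \<epsilon> f = \<epsilon>(j := 0)"
proof
  fix j'
  obtain w where w: "w \<in> f" "\<forall>i\<in>spt \<epsilon> - {j}. w i < p" using KS_base[OF assms(4)] by blast
  show "zo \<epsilon> f j' = (\<epsilon>(j := 0)) j'"
  proof (cases "j' = j")
    case True then show ?thesis unfolding zo_def using assms(3) by simp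
  next
    case False
    show ?thesis
    proof (cases "j' \<in> spt \<epsilon>")
      case True
      then have "w j' < p" using w(2) False by blast
      then have nall: "\<not> (\<forall>x\<in>f. x j' = p)" using w(1) by fastforce
      have "zo \<epsilon> f j' = \<epsilon> j'" unfolding zo_def using nall by (rule if_not_P)
      then show ?thesis using False by simp
    next
      case F2: False
      then have "\<epsilon> j' = 0" unfolding spt_def by simp
      then show ?thesis unfolding zo_def using False by simp
    qed
  qed
qed

lemma sv_upd0: "sv d \<epsilon> \<Longrightarrow> sv d (\<epsilon>(j := 0))"
  unfolding sv_def by auto

lemma spt_upd0: "spt (\<epsilon>(j := 0)) = spt \<epsilon> - {j}"
  unfolding spt_def by auto

lemma Sset_upd0_sub: "Sset (\<epsilon>(j := 0)) \<subseteq> Sset \<epsilon>"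
  unfolding Sset_def spt_upd0 by auto

lemma IF_elem:
  assumes "(\<epsilon>, f) \<in> IF k"
  shows "\<exists>j. j \<in> spt \<epsilon> \<and> (\<forall>x\<in>f. x j = p) \<and> KS p (spt \<epsilon> - {j}) f \<and> zo \<epsilon> f = \<epsilon>(j := 0)
     \<and> lab \<epsilon> ` f = Sset \<epsilon> \<and> sv d \<epsilon> \<and> card (spt \<epsilon>) = k"
proof -
  have e: "\<epsilon> \<in> E k" "f \<in> Inn \<epsilon>" using assms unfolding IF_def by auto
  have sv: "sv d \<epsilon>" and ck: "card (spt \<epsilon>) = k" using e(1) unfolding E_def by auto
  have fF: "f \<in> Fac \<epsilon>" and lf: "lab \<epsilon> ` f = Sset \<epsilon>" using e(2) unfolding Inn_def by auto
  obtain j where j: "j \<in> spt \<epsilon>" "\<forall>y\<in>f. y j = p" using e(2) unfolding Inn_def by blast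
  have k: "KS p (spt \<epsilon> - {j}) f" using Fac_KS[OF sv fF j] .
  show ?thesis using j k zo_eq[OF sv j k] lf sv ck by blast
qed

lemma IF_to_P:
  assumes "(\<epsilon>, f) \<in> IF k" "1 \<le> k"
  shows "(zo \<epsilon> f, f) \<in> P (k - 1)"
proof -
  obtain j where j: "j \<in> spt \<epsilon>" "\<forall>x\<in>f. x j = p" "KS p (spt \<epsilon> - {j}) f" "zo \<epsilon> f = \<epsilon>(j := 0)"
    "lab \<epsilon> ` f = Sset \<epsilon>" "sv d \<epsilon>" "card (spt \<epsilon>) = k" using IF_elem[OF assms(1)] by blast
  define \<epsilon>' where "\<epsilon>' = \<epsilon>(j := 0)"
  have sv': "sv d \<epsilon>'" unfolding \<epsilon>'_def using sv_upd0[OF j(6)] .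
  have spt': "spt \<epsilon>' = spt \<epsilon> - {j}" unfolding \<epsilon>'_def by (rule spt_upd0)
  have fin: "finite (spt \<epsilon>)" using sv_finite[OF j(6)] .
  have ck': "card (spt \<epsilon>') = k - 1" using spt' j(1,7) fin by simp
  have labeq: "lab \<epsilon>' ` f = lab \<epsilon> ` f"
  proof (rule image_cong[OF refl])
    fix w assume "w \<in> f" then have "w j = p" using j(2) by simp
    then show "lab \<epsilon>' w = lab \<epsilon> w" unfolding \<epsilon>'_def by (rule lab_upd)
  qed
  have ks: "KS p (spt \<epsilon>') f" using j(3) spt' by simp
  have sub: "Sset \<epsilon>' \<subseteq> lab \<epsilon>' ` f" using labeq j(5) Sset_upd0_sub unfolding \<epsilon>'_def by simp
  have inj: "inj_on (lab \<epsilon>') f"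
  proof (rule eq_card_imp_inj_on)
    show "finite f" using KS_fin[OF ks] .
    have "card f = Suc (card (spt \<epsilon>'))" using KS_card[OF ks] .
    also have "\<dots> = k" using ck' assms(2) by simp
    also have "k = card (Sset \<epsilon>)" using Sset_card[OF j(6)] j(7) by simp
    finally show "card (lab \<epsilon>' ` f) = card f" using labeq j(5) by simp
  qed
  have "\<epsilon>' \<in> E (k - 1)" unfolding E_def using sv' ck' by simp
  moreover have "f \<in> NHs \<epsilon>'" unfolding NHs_def using ks sub inj by simp
  ultimately show ?thesis unfolding P_def j(4) \<epsilon>'_def by simp
qed

end

context tuck begin

lemma IF_inj: "inj_on (\<lambda>(\<epsilon>, f). (zo \<epsilon> f, f)) (IF k)"
proof (rule inj_onI)
  fix x y assume x: "x \<in> IF k" and y: "y \<in> IF k" and eq: "(\<lambda>(\<epsilon>, f). (zo \<epsilon> f, f)) x = (\<lambda>(\<epsilon>, f). (zo \<epsilon> f, f)) y"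
  obtain \<epsilon>1 f1 where x1: "x = (\<epsilon>1, f1)" by (cases x)
  obtain \<epsilon>2 f2 where y2: "y = (\<epsilon>2, f2)" by (cases y)
  have ff: "f1 = f2" and zz: "zo \<epsilon>1 f1 = zo \<epsilon>2 f2" using eq x1 y2 by auto
  obtain j1 where j1: "j1 \<in> spt \<epsilon>1" "\<forall>x\<in>f1. x j1 = p" "KS p (spt \<epsilon>1 - {j1}) f1" "zo \<epsilon>1 f1 = \<epsilon>1(j1 := 0)"
    "lab \<epsilon>1 ` f1 = Sset \<epsilon>1" "sv d \<epsilon>1" using IF_elem[of \<epsilon>1 f1 k] x x1 by blast
  obtain j2 where j2: "j2 \<in> spt \<epsilon>2" "\<forall>x\<in>f2. x j2 = p" "KS p (spt \<epsilon>2 - {j2}) f2" "zo \<epsilon>2 f2 = \<epsilon>2(j2 := 0)"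
    "lab \<epsilon>2 ` f2 = Sset \<epsilon>2" "sv d \<epsilon>2" using IF_elem[of \<epsilon>2 f2 k] y y2 by blast
  have l1: "lab \<epsilon>1 ` f1 = lab (zo \<epsilon>1 f1) ` f1"
  proof (rule image_cong[OF refl])
    fix w assume "w \<in> f1" then have "w j1 = p" using j1(2) by simp
    then show "lab \<epsilon>1 w = lab (zo \<epsilon>1 f1) w" unfolding j1(4) by (simp add: lab_upd)
  qed
  have l2: "lab \<epsilon>2 ` f2 = lab (zo \<epsilon>2 f2) ` f2"
  proof (rule image_cong[OF refl])
    fix w assume "w \<in> f2" then have "w j2 = p" using j2(2) by simp
    then show "lab \<epsilon>2 w = lab (zo \<epsilon>2 f2) w" unfolding j2(4) by (simp add: lab_upd)
  qed
  have "Sset \<epsilon>1 = Sset \<epsilon>2" using j1(5) j2(5) l1 l2 ff zz by simp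
  then have "\<epsilon>1 = \<epsilon>2" using Sset_inj[OF j1(6) j2(6)] by simp
  then show "x = y" using x1 y2 ff by simp
qed

lemma P_to_IF:
  assumes "(\<epsilon>', f) \<in> P (k - 1)" "1 \<le> k"
  shows "\<exists>\<epsilon>. (\<epsilon>, f) \<in> IF k \<and> zo \<epsilon> f = \<epsilon>'"
proof -
  have e: "\<epsilon>' \<in> E (k - 1)" "f \<in> NHs \<epsilon>'" using assms(1) unfolding P_def by auto
  have sv': "sv d \<epsilon>'" and ck': "card (spt \<epsilon>') = k - 1" using e(1) unfolding E_def by auto
  have ks: "KS p (spt \<epsilon>') f" and sub: "Sset \<epsilon>' \<subseteq> lab \<epsilon>' ` f" and inj: "inj_on (lab \<epsilon>') f"
    using e(2) unfolding NHs_def by auto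
  have finS: "finite (Sset \<epsilon>')" unfolding Sset_def using sv_finite[OF sv'] by simp
  have cf: "card f = k" using KS_card[OF ks] ck' assms(2) by simp
  have "card f > card (Sset \<epsilon>')" using cf Sset_card[OF sv'] ck' assms(2) by simp
  then obtain u where u: "u \<in> f" "lab \<epsilon>' u \<notin> Sset \<epsilon>'"
    using exists_new_label[OF KS_fin[OF ks] _ inj finS] by blast
  define l where "l = lab \<epsilon>' u"
  define i where "i = nat \<bar>l\<bar> - 1"
  have i0: "\<epsilon>' i = 0" and id: "i < d" using new_label[OF sv' ks u sub] unfolding i_def l_def by auto
  have r: "1 \<le> \<bar>l\<bar>" using rng[OF sv' ks u(1)] unfolding l_def lab_def by auto
  have n1: "0 < nat \<bar>l\<bar>" using r by simp
  have si: "Suc i = nat \<bar>l\<bar>" unfolding i_def using n1 by simp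
  have il: "int (Suc i) = \<bar>l\<bar>" unfolding si by simp
  define \<epsilon> where "\<epsilon> = \<epsilon>'(i := sgn l)"
  have sgnl: "sgn l = 1 \<or> sgn l = -1" using r by (auto simp: sgn_if)
  have sv: "sv d \<epsilon>" unfolding \<epsilon>_def sv_def using sv' sgnl id unfolding sv_def by auto
  have spte: "spt \<epsilon> = insert i (spt \<epsilon>')" unfolding \<epsilon>_def spt_def using sgnl by auto
  have inot: "i \<notin> spt \<epsilon>'" using i0 unfolding spt_def by simp
  have ck: "card (spt \<epsilon>) = k" using spte inot sv_finite[OF sv'] ck' assms(2) by simp
  have spte': "spt \<epsilon> - {i} = spt \<epsilon>'" using spte inot by auto
  have iin: "i \<in> spt \<epsilon>" using spte by simp
  obtain s a where s: "KS p (spt \<epsilon>) s" "a \<in> s" "f = s - {a}"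
    using KS_top_face_conv[of p "spt \<epsilon>" i f] ks spte' iin sv_finite[OF sv] p0 by auto
  have fF: "f \<in> Fac \<epsilon>" unfolding Fac_def using s by blast
  have top: "\<forall>x\<in>f. x i = p" using KS_vertex(2)[OF ks] inot by blast
  have labeq: "lab \<epsilon> ` f = lab \<epsilon>' ` f"
  proof (rule image_cong[OF refl])
    fix w assume "w \<in> f" then have "w i = p" using top by simp
    then show "lab \<epsilon> w = lab \<epsilon>' w" unfolding \<epsilon>_def by (rule lab_upd)
  qed
  have Sse: "Sset \<epsilon> = insert l (Sset \<epsilon>')"
  proof -
    have "Sset \<epsilon> = (\<lambda>j. \<epsilon> j * int (Suc j)) ` insert i (spt \<epsilon>')" unfolding Sset_def spte ..
    also have "\<dots> = insert (\<epsilon> i * int (Suc i)) ((\<lambda>j. \<epsilon> j * int (Suc j)) ` spt \<epsilon>')" by simp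
    also have "(\<lambda>j. \<epsilon> j * int (Suc j)) ` spt \<epsilon>' = Sset \<epsilon>'"
      unfolding Sset_def \<epsilon>_def using inot by (intro image_cong refl) auto
    also have "\<epsilon> i * int (Suc i) = l" unfolding \<epsilon>_def il by (simp add: sgn_mult_abs)
    finally show ?thesis .
  qed
  have lf: "lab \<epsilon>' ` f = insert l (Sset \<epsilon>')"
  proof -
    have "insert l (Sset \<epsilon>') \<subseteq> lab \<epsilon>' ` f" using sub u(1) unfolding l_def by blast
    moreover have "card (insert l (Sset \<epsilon>')) = card (lab \<epsilon>' ` f)"
    proof -
      have "card (insert l (Sset \<epsilon>')) = Suc (card (Sset \<epsilon>'))" using u(2) finS unfolding l_def by simp
      also have "\<dots> = k" using Sset_card[OF sv'] ck' assms(2) by simp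
      also have "\<dots> = card (lab \<epsilon>' ` f)" using cf inj by (simp add: card_image)
      finally show ?thesis .
    qed
    ultimately show ?thesis using card_subset_eq[OF finite_imageI[OF KS_fin[OF ks]]] by metis
  qed
  have "\<epsilon> \<in> E k" unfolding E_def using sv ck by simp
  moreover have "f \<in> Inn \<epsilon>"
  proof -
    have lab_ok: "lab \<epsilon> ` f = Sset \<epsilon>" using labeq lf Sse by simp
    have "\<exists>j\<in>spt \<epsilon>. \<forall>x\<in>f. x j = p" using iin top by blast
    then show ?thesis unfolding Inn_def using fF lab_ok by simp
  qed
  ultimately have mem: "(\<epsilon>, f) \<in> IF k" unfolding IF_def by simp
  have "zo \<epsilon> f = \<epsilon>(i := 0)"
    using IF_elem[OF mem] zo_eq[OF sv iin top] ks spte' by simp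
  also have "\<epsilon>(i := 0) = \<epsilon>'" unfolding \<epsilon>_def using i0 by (simp add: fun_eq_iff)
  finally show ?thesis using mem by blast
qed

lemma IF_card:
  assumes "1 \<le> k" shows "card (IF k) = card (P (k - 1))"
proof -
  have "(\<lambda>(\<epsilon>, f). (zo \<epsilon> f, f)) ` IF k = P (k - 1)"
  proof (intro equalityI subsetI)
    fix y assume "y \<in> (\<lambda>(\<epsilon>, f). (zo \<epsilon> f, f)) ` IF k"
    then obtain \<epsilon> f where "(\<epsilon>, f) \<in> IF k" "y = (zo \<epsilon> f, f)" by auto
    then show "y \<in> P (k - 1)" using IF_to_P assms by simp
  next
    fix y assume y: "y \<in> P (k - 1)"
    obtain \<epsilon>' f where yy: "y = (\<epsilon>', f)" by (cases y)
    obtain \<epsilon> where "(\<epsilon>, f) \<in> IF k" "zo \<epsilon> f = \<epsilon>'" using P_to_IF[of \<epsilon>' f k] y yy assms by auto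
    then show "y \<in> (\<lambda>(\<epsilon>, f). (zo \<epsilon> f, f)) ` IF k" using yy by force
  qed
  moreover have "card ((\<lambda>(\<epsilon>, f). (zo \<epsilon> f, f)) ` IF k) = card (IF k)" by (rule card_image[OF IF_inj])
  ultimately show ?thesis by simp
qed

lemma all_odd: "k \<le> d \<Longrightarrow> odd (card (P k))"
proof (induction k)
  case 0 then show ?case using P_0 by simp
next
  case (Suc k)
  have "even (card (P (Suc k)) + card (IF (Suc k)) + card (OF (Suc k)))" using level_parity[of "Suc k"] by simp
  moreover have "card (IF (Suc k)) = card (P k)" using IF_card[of "Suc k"] by simp
  moreover have "even (card (OF (Suc k)))" using OF_even[of "Suc k"] by simp
  moreover have "odd (card (P k))" using Suc by simp
  ultimately show ?case by simp
qed

lemma contradiction: False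
  using all_odd[of d] P_d_empty by simp

end

theorem tucker_grid:
  fixes d p :: nat and lam :: "(nat \<Rightarrow> int) \<Rightarrow> int"
  assumes "1 \<le> d" "0 < p"
  and rng: "\<And>\<epsilon> s w. sv d \<epsilon> \<Longrightarrow> KS p (spt \<epsilon>) s \<Longrightarrow> w \<in> s \<Longrightarrow> 1 \<le> \<bar>lam (emb p \<epsilon> w)\<bar> \<and> \<bar>lam (emb p \<epsilon> w)\<bar> \<le> int d"
  and anti: "\<And>\<epsilon> s w j. sv d \<epsilon> \<Longrightarrow> KS p (spt \<epsilon>) s \<Longrightarrow> w \<in> s \<Longrightarrow> \<epsilon> j \<noteq> 0 \<Longrightarrow> w j = 0 \<Longrightarrow> lam (- emb p \<epsilon> w) = - lam (emb p \<epsilon> w)"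
  shows "\<exists>\<epsilon> s u v. sv d \<epsilon> \<and> KS p (spt \<epsilon>) s \<and> u \<in> s \<and> v \<in> s \<and> lam (emb p \<epsilon> u) = - lam (emb p \<epsilon> v)"
proof (rule ccontr)
  assume "\<not> ?thesis"
  then have nc: "\<And>\<epsilon> s u v. sv d \<epsilon> \<Longrightarrow> KS p (spt \<epsilon>) s \<Longrightarrow> u \<in> s \<Longrightarrow> v \<in> s \<Longrightarrow> lam (emb p \<epsilon> u) \<noteq> - lam (emb p \<epsilon> v)"
    by blast
  interpret tuck d p lam using assms nc by unfold_locales auto
  show False by (rule contradiction)
qed

locale neck =
  fixes n m :: nat and x y :: "nat \<Rightarrow> nat \<Rightarrow> nat" and z :: "nat \<Rightarrow> nat"
  assumes n1: "n \<ge> 1" and m1: "m \<ge> 1"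
    and xz: "\<forall>i\<in>{1..m}. \<forall>j<2*n. x i j \<le> z j"
    and yz: "\<forall>i\<in>{1..m}. \<forall>j<2*n. y i j \<le> z j"
begin

definition "d = 2 * n"
definition "M = 3 * d * m"
definition absn :: "(nat \<Rightarrow> int) \<Rightarrow> nat \<Rightarrow> nat" where "absn g i = nat \<bar>g i\<bar>"
definition A :: "(nat \<Rightarrow> int) \<Rightarrow> nat \<Rightarrow> nat" where "A g k = (\<Sum>i<k. absn g i)"
definition mx :: "(nat \<Rightarrow> int) \<Rightarrow> nat" where "mx g = Max (absn g ` {..<d})"
definition D :: "(nat \<Rightarrow> int) \<Rightarrow> nat" where "D g = A g d + d * (M - mx g)"
definition cut :: "(nat \<Rightarrow> int) \<Rightarrow> nat \<Rightarrow> nat" where "cut g k = (m * A g k) div D g"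
definition inbox :: "(nat \<Rightarrow> int) \<Rightarrow> bool" where "inbox g \<longleftrightarrow> (\<forall>i. \<bar>g i\<bar> \<le> int M) \<and> (\<forall>i\<ge>d. g i = 0)"

lemma d_pos: "1 \<le> d" unfolding d_def using n1 by simp
lemma M_pos: "0 < M" unfolding M_def using d_pos m1 by simp

lemma absn_le: "inbox g \<Longrightarrow> absn g i \<le> M"
  unfolding inbox_def absn_def by (metis nat_le_iff)

lemma mx_le: "inbox g \<Longrightarrow> mx g \<le> M"
proof -
  assume "inbox g"
  have "finite (absn g ` {..<d})" by simp
  moreover have "absn g ` {..<d} \<noteq> {}"
  proof -
    have "0 \<in> {..<d}" using d_pos by simp
    then show ?thesis by blast
  qed
  ultimately show "mx g \<le> M" unfolding mx_def using absn_le[OF \<open>inbox g\<close>] by (simp add: Max_le_iff)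
qed

lemma absn_le_mx: "i < d \<Longrightarrow> absn g i \<le> mx g"
  unfolding mx_def by (simp add: Max_ge)

lemma A_mono: "k \<le> k' \<Longrightarrow> A g k \<le> A g k'"
  unfolding A_def by (rule sum_mono2) auto

lemma A_Suc: "A g (Suc k) = A g k + absn g k"
  unfolding A_def by simp

lemma mx_le_A: "mx g \<le> A g d"
proof -
  have "finite (absn g ` {..<d})" by simp
  moreover have "absn g ` {..<d} \<noteq> {}"
  proof -
    have "0 \<in> {..<d}" using d_pos by simp
    then show ?thesis by blast
  qed
  ultimately obtain i where i: "i < d" "mx g = absn g i" unfolding mx_def
    by (metis (no_types, lifting) Max_in imageE lessThan_iff)
  have "absn g i \<le> A g d" unfolding A_def using i(1) by (intro member_le_sum) auto
  then show ?thesis using i by simp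
qed

lemma D_ge_M: "inbox g \<Longrightarrow> M \<le> D g"
proof -
  assume b: "inbox g"
  have "mx g \<le> M" using mx_le[OF b] .
  have "M = mx g + (M - mx g)" using \<open>mx g \<le> M\<close> by simp
  also have "\<dots> \<le> A g d + d * (M - mx g)" using mx_le_A d_pos by (intro add_mono) auto
  finally show ?thesis unfolding D_def .
qed

lemma D_pos: "inbox g \<Longrightarrow> 0 < D g"
  using D_ge_M M_pos by (meson less_le_trans)

lemma A_le_D: "k \<le> d \<Longrightarrow> A g k \<le> D g"
  unfolding D_def using A_mono[of k d g] by simp

lemma cut_0: "cut g 0 = 0"
  unfolding cut_def A_def by simp

lemma cut_mono: "k \<le> k' \<Longrightarrow> cut g k \<le> cut g k'"
  unfolding cut_def using A_mono by (intro div_le_mono mult_le_mono2) auto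

lemma cut_le_m: "inbox g \<Longrightarrow> k \<le> d \<Longrightarrow> cut g k \<le> m"
proof -
  assume b: "inbox g" and k: "k \<le> d"
  have "m * A g k \<le> m * D g" using A_le_D[OF k] by simp
  then have "(m * A g k) div D g \<le> (m * D g) div D g" by (rule div_le_mono)
  then show ?thesis unfolding cut_def using D_pos[OF b] by simp
qed

lemma cut_bdry:
  assumes b: "inbox g" and i: "i < d" "\<bar>g i\<bar> = int M"
  shows "cut g d = m"
proof -
  have "absn g i = M" unfolding absn_def using i(2) by simp
  then have "mx g = M" using absn_le_mx[OF i(1), of g] mx_le[OF b] by simp
  then have "D g = A g d" unfolding D_def by simp
  then show ?thesis unfolding cut_def using D_pos[OF b] by simp
qed

end

lemma floor_close:
  fixes a a' D D' q q' m M d :: int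
  assumes "0 \<le> a" "a \<le> D" "D' - D \<le> 2*d" "a - a' \<le> d" "M \<le> D'" "0 < D" "0 < D'"
    "m*(3*d) \<le> M" "0 \<le> m" "0 \<le> d" "q * D \<le> m*a" "m*a' < (q'+1)*D'"
  shows "q \<le> q' + 1"
proof (rule ccontr)
  assume "\<not> q \<le> q' + 1"
  then have qq: "q' + 2 \<le> q" by simp
  have h1: "a*(D' - D) \<le> a*(2*d)" using assms(1,3) by (rule mult_left_mono[rotated])
  have h2: "D*(a - a') \<le> D*d" using assms(4,6) by (intro mult_left_mono) auto
  have h3: "a*(2*d) \<le> D*(2*d)" using assms(2,10) by (intro mult_right_mono) auto
  have id1: "a*D' - a'*D = a*(D' - D) + D*(a - a')" by (simp add: algebra_simps)
  have h4: "a*D' - a'*D \<le> D*(3*d)" using h1 h2 h3 id1 by (simp add: algebra_simps)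
  have h5: "m*(a*D' - a'*D) \<le> m*(D*(3*d))" using h4 assms(9) by (rule mult_left_mono)
  have h6: "m*(D*(3*d)) = (m*(3*d))*D" by (simp add: algebra_simps)
  have h7: "(m*(3*d))*D \<le> M*D" using assms(8,6) by (intro mult_right_mono) auto
  have h8: "M*D \<le> D'*D" using assms(5,6) by (intro mult_right_mono) auto
  have A1: "m*a*D' - m*a'*D \<le> D'*D" using h5 h6 h7 h8 by (simp add: algebra_simps)
  have h9: "q*D*D' \<le> m*a*D'" using assms(11,7) by (intro mult_right_mono) auto
  have h10: "m*a'*D < (q'+1)*D'*D" using assms(12,6) by (intro mult_strict_right_mono) auto
  have h11: "(q'+2)*(D*D') \<le> q*(D*D')" using qq assms(6,7) by (intro mult_right_mono) auto
  have "m*a*D' - m*a'*D > q*D*D' - (q'+1)*D'*D" using h9 h10 by linarith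
  moreover have "q*D*D' - (q'+1)*D'*D \<ge> D*D'" using h11 by (simp add: algebra_simps)
  ultimately show False using A1 by (simp add: algebra_simps)
qed

context neck begin

lemma absn_close: "\<bar>g i - g' i\<bar> \<le> 1 \<Longrightarrow> absn g i \<le> absn g' i + 1"
  unfolding absn_def by linarith

lemma A_close:
  assumes "\<forall>i. \<bar>g i - g' i\<bar> \<le> 1" shows "A g k \<le> A g' k + k"
proof -
  have "A g k \<le> (\<Sum>i<k. absn g' i + 1)" unfolding A_def using absn_close assms by (intro sum_mono) auto
  also have "\<dots> = (\<Sum>i<k. absn g' i) + (\<Sum>i<k. (1::nat))" by (rule sum.distrib)
  also have "\<dots> = A g' k + k" unfolding A_def by simp
  finally show ?thesis .
qed

lemma mx_close:
  assumes "\<forall>i. \<bar>g i - g' i\<bar> \<le> 1" shows "mx g \<le> mx g' + 1"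
proof -
  have ne: "absn g ` {..<d} \<noteq> {}"
  proof -
    have "0 \<in> {..<d}" using d_pos by simp
    then show ?thesis by blast
  qed
  have "\<forall>v\<in>absn g ` {..<d}. v \<le> mx g' + 1"
  proof
    fix v assume "v \<in> absn g ` {..<d}"
    then obtain i where i: "i < d" "v = absn g i" by blast
    have "absn g i \<le> absn g' i + 1" using absn_close assms by blast
    also have "\<dots> \<le> mx g' + 1" using absn_le_mx[OF i(1)] by simp
    finally show "v \<le> mx g' + 1" using i by simp
  qed
  then show ?thesis unfolding mx_def[of g] using ne by (simp add: Max_le_iff)
qed

lemma D_close:
  assumes "\<forall>i. \<bar>g i - g' i\<bar> \<le> 1" "inbox g" "inbox g'"
  shows "int (D g) - int (D g') \<le> 2 * int d"
proof -
  have s: "\<forall>i. \<bar>g' i - g i\<bar> \<le> 1" using assms(1) by (simp add: abs_minus_commute)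
  have a: "A g d \<le> A g' d + d" using A_close[OF assms(1)] .
  have b: "mx g' \<le> mx g + 1" using mx_close[OF s] .
  have "M - mx g \<le> M - mx g' + 1" using b by simp
  then have "d * (M - mx g) \<le> d * (M - mx g') + d" using mult_le_mono2[of "M - mx g" "M - mx g' + 1" d] by simp
  then have "D g \<le> D g' + 2 * d" unfolding D_def using a by simp
  then show ?thesis by linarith
qed

lemma cut_close:
  assumes "\<forall>i. \<bar>g i - g' i\<bar> \<le> 1" "inbox g" "inbox g'" "k \<le> d"
  shows "cut g k \<le> cut g' k + 1"
proof -
  define q where "q = cut g k"
  define q' where "q' = cut g' k"
  have Dp: "0 < D g" "0 < D g'" using D_pos assms(2,3) by auto
  have f1: "q * D g \<le> m * A g k" unfolding q_def cut_def by (rule div_times_less_eq_dividend)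
  have f2: "m * A g' k < (q' + 1) * D g'"
  proof -
    have e: "(m * A g' k) div D g' * D g' + (m * A g' k) mod D g' = m * A g' k" by (rule div_mult_mod_eq)
    have "(m * A g' k) mod D g' < D g'" using Dp(2) by simp
    then have "m * A g' k < (m * A g' k) div D g' * D g' + D g'" using e by linarith
    then show ?thesis unfolding q'_def cut_def by (simp add: algebra_simps)
  qed
  have "int q \<le> int q' + 1"
  proof (rule floor_close[where a = "int (A g k)" and a' = "int (A g' k)" and D = "int (D g)" and D' = "int (D g')"
        and m = "int m" and M = "int M" and d = "int d"])
    show "0 \<le> int (A g k)" by simp
    show "int (A g k) \<le> int (D g)" using A_le_D[OF assms(4)] by simp
    show "int (D g') - int (D g) \<le> 2 * int d"
      using D_close[of g' g] assms(1,2,3) by (simp add: abs_minus_commute)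
    show "int (A g k) - int (A g' k) \<le> int d" using A_close[OF assms(1), of k] assms(4) by simp
    show "int M \<le> int (D g')" using D_ge_M[OF assms(3)] by simp
    show "0 < int (D g)" "0 < int (D g')" using Dp by auto
    show "int m * (3 * int d) \<le> int M" unfolding M_def by simp
    show "0 \<le> int m" "0 \<le> int d" by auto
    show "int q * int (D g) \<le> int m * int (A g k)" using f1 by (metis of_nat_le_iff of_nat_mult)
    show "int m * int (A g' k) < (int q' + 1) * int (D g')" using f2 by (metis of_nat_Suc of_nat_less_iff of_nat_mult Suc_eq_plus1 add.commute)
  qed
  then show ?thesis unfolding q_def q'_def by simp
qed

end

context neck begin

definition neg :: "(nat \<Rightarrow> int) \<Rightarrow> nat \<Rightarrow> bool" where
  "neg g b \<longleftrightarrow> (\<exists>r<d. cut g r < b \<and> b \<le> cut g (Suc r) \<and> g r < 0)"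
definition sg :: "(nat \<Rightarrow> int) \<Rightarrow> nat \<Rightarrow> int" where
  "sg g b = (if neg g b then -1 else 1)"
definition dv :: "nat \<Rightarrow> nat \<Rightarrow> int" where
  "dv b j = int (x b j) - int (y b j)"
definition Q :: "(nat \<Rightarrow> int) \<Rightarrow> nat \<Rightarrow> int" where
  "Q g j = (\<Sum>b\<in>{1..m}. sg g b * dv b j)"
definition Cs :: "(nat \<Rightarrow> int) \<Rightarrow> nat set" where
  "Cs g = cut g ` {1..d}"

lemma run_nonempty:
  assumes "cut g r < b" "b \<le> cut g (Suc r)" shows "g r \<noteq> 0"
proof
  assume "g r = 0"
  then have "A g (Suc r) = A g r" unfolding A_Suc absn_def by simp
  then have "cut g (Suc r) = cut g r" unfolding cut_def by simp
  then show False using assms by simp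
qed

lemma neg_transfer:
  assumes cl: "\<forall>i. \<bar>g i - g' i\<bar> \<le> 1" and bx: "inbox g" "inbox g'"
    and nb: "b \<notin> Cs g" "b \<notin> Cs g'" and b1: "1 \<le> b" and ng: "neg g b"
  shows "neg g' b"
proof -
  have cl': "\<forall>i. \<bar>g' i - g i\<bar> \<le> 1" using cl by (simp add: abs_minus_commute)
  obtain r where r: "r < d" "cut g r < b" "b \<le> cut g (Suc r)" "g r < 0" using ng unfolding neg_def by blast
  have c1: "cut g' r < b"
  proof (cases "r = 0")
    case True then show ?thesis using b1 cut_0 by simp
  next
    case False
    then have rin: "r \<in> {1..d}" using r(1) by simp
    have "cut g' r \<le> cut g r + 1" using cut_close[OF cl' bx(2,1)] r(1) by simp
    moreover have "cut g' r \<noteq> b" using nb(2) rin unfolding Cs_def by blast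
    ultimately show ?thesis using r(2) by simp
  qed
  have c2: "b \<le> cut g' (Suc r)"
  proof -
    have rin: "Suc r \<in> {1..d}" using r(1) by simp
    have "cut g (Suc r) \<noteq> b" using nb(1) rin unfolding Cs_def by blast
    then have "b + 1 \<le> cut g (Suc r)" using r(3) by simp
    moreover have "cut g (Suc r) \<le> cut g' (Suc r) + 1" using cut_close[OF cl bx] r(1) by simp
    ultimately show ?thesis by simp
  qed
  have "g' r \<noteq> 0" using run_nonempty[OF c1 c2] .
  moreover have "g' r \<le> g r + 1" using cl'[rule_format, of r] by linarith
  ultimately have "g' r < 0" using r(4) by simp
  then show ?thesis unfolding neg_def using r(1) c1 c2 by blast
qed

lemma sg_eq:
  assumes cl: "\<forall>i. \<bar>g i - g' i\<bar> \<le> 1" and bx: "inbox g" "inbox g'"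
    and b: "b \<in> {1..m}" "b \<notin> Cs g \<union> Cs g'"
  shows "sg g b = sg g' b"
proof -
  have cl': "\<forall>i. \<bar>g' i - g i\<bar> \<le> 1" using cl by (simp add: abs_minus_commute)
  have "neg g b \<longleftrightarrow> neg g' b"
    using neg_transfer[OF cl bx, of b] neg_transfer[OF cl' bx(2,1), of b] b by auto
  then show ?thesis unfolding sg_def by simp
qed

lemma dv_bound: "b \<in> {1..m} \<Longrightarrow> j < d \<Longrightarrow> \<bar>dv b j\<bar> \<le> int (z j)"
  using xz yz unfolding dv_def d_def by fastforce

lemma sg_abs: "\<bar>sg g b\<bar> = 1"
  unfolding sg_def by simp

lemma Q_close:
  assumes cl: "\<forall>i. \<bar>g i - g' i\<bar> \<le> 1" and bx: "inbox g" "inbox g'" and j: "j < d"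
  shows "\<bar>Q g j - Q g' j\<bar> \<le> 4 * int d * int (z j)"
proof -
  define B where "B = {1..m} \<inter> (Cs g \<union> Cs g')"
  have finB: "finite B" unfolding B_def by simp
  have "Q g j - Q g' j = (\<Sum>b\<in>{1..m}. (sg g b - sg g' b) * dv b j)"
    unfolding Q_def by (simp add: sum_subtractf algebra_simps)
  also have "\<dots> = (\<Sum>b\<in>B. (sg g b - sg g' b) * dv b j)"
  proof (rule sum.mono_neutral_right)
    show "finite {1..m}" by simp
    show "B \<subseteq> {1..m}" unfolding B_def by blast
    show "\<forall>b\<in>{1..m} - B. (sg g b - sg g' b) * dv b j = 0"
      using sg_eq[OF cl bx] unfolding B_def by simp
  qed
  finally have e: "Q g j - Q g' j = (\<Sum>b\<in>B. (sg g b - sg g' b) * dv b j)" .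
  have "\<bar>\<Sum>b\<in>B. (sg g b - sg g' b) * dv b j\<bar> \<le> (\<Sum>b\<in>B. \<bar>(sg g b - sg g' b) * dv b j\<bar>)"
    by (rule sum_abs)
  also have "\<dots> \<le> (\<Sum>b\<in>B. 2 * int (z j))"
  proof (rule sum_mono)
    fix b assume b: "b \<in> B"
    have "\<bar>sg g b - sg g' b\<bar> \<le> 2" using sg_abs[of g b] sg_abs[of g' b] by linarith
    moreover have "\<bar>dv b j\<bar> \<le> int (z j)" using dv_bound[OF _ j] b unfolding B_def by blast
    ultimately have "\<bar>sg g b - sg g' b\<bar> * \<bar>dv b j\<bar> \<le> 2 * int (z j)"
      by (intro mult_mono) auto
    then show "\<bar>(sg g b - sg g' b) * dv b j\<bar> \<le> 2 * int (z j)" by (simp add: abs_mult)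
  qed
  also have "\<dots> = int (card B) * (2 * int (z j))" by simp
  also have "\<dots> \<le> int (2 * d) * (2 * int (z j))"
  proof (rule mult_right_mono)
    have "card B \<le> card (Cs g \<union> Cs g')" unfolding B_def by (intro card_mono) (auto simp: Cs_def)
    also have "\<dots> \<le> card (Cs g) + card (Cs g')" by (rule card_Un_le)
    also have "\<dots> \<le> card {1..d} + card {1..d}" unfolding Cs_def by (intro add_mono card_image_le) auto
    finally show "int (card B) \<le> int (2 * d)" by simp
  qed simp
  finally show ?thesis using e by (simp add: algebra_simps)
qed

lemma neg_unique:
  assumes "cut g r < b" "b \<le> cut g (Suc r)" "cut g r' < b" "b \<le> cut g (Suc r')"
  shows "r = r'"
proof (rule ccontr)
  assume "r \<noteq> r'"
  then consider "Suc r \<le> r'" | "Suc r' \<le> r" by linarith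
  then show False
  proof cases
    case 1 then have "cut g (Suc r) \<le> cut g r'" by (rule cut_mono)
    then show False using assms by simp
  next
    case 2 then have "cut g (Suc r') \<le> cut g r" by (rule cut_mono)
    then show False using assms by simp
  qed
qed

lemma run_exists:
  assumes "cut g d = m" "1 \<le> b" "b \<le> m"
  shows "\<exists>r<d. cut g r < b \<and> b \<le> cut g (Suc r)"
proof -
  define K where "K = {k. k \<le> d \<and> cut g k < b}"
  have fin: "finite K" unfolding K_def by simp
  have "0 \<in> K" unfolding K_def using cut_0 assms(2) by simp
  then have ne: "K \<noteq> {}" by blast
  define r where "r = Max K"
  have rK: "r \<in> K" unfolding r_def using fin ne by simp
  then have r: "r \<le> d" "cut g r < b" unfolding K_def by auto
  have "r \<noteq> d" using r(2) assms(1,3) by auto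
  then have rd: "r < d" using r(1) by simp
  have "b \<le> cut g (Suc r)"
  proof (rule ccontr)
    assume "\<not> b \<le> cut g (Suc r)"
    then have "Suc r \<in> K" unfolding K_def using rd by simp
    then have "Suc r \<le> r" unfolding r_def using fin by simp
    then show False by simp
  qed
  then show ?thesis using rd r(2) by blast
qed

lemma absn_neg: "absn (\<lambda>i. - g i) = absn g"
  unfolding absn_def by (simp add: fun_eq_iff)

lemma cut_neg: "cut (\<lambda>i. - g i) = cut g"
  unfolding cut_def D_def mx_def A_def absn_neg ..

lemma sg_antipodal:
  assumes bx: "inbox g" and i: "i < d" "\<bar>g i\<bar> = int M" and b: "b \<in> {1..m}"
  shows "sg (\<lambda>i. - g i) b = - sg g b"
proof -
  have cd: "cut g d = m" using cut_bdry[OF bx i] .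
  obtain r where r: "r < d" "cut g r < b" "b \<le> cut g (Suc r)" using run_exists[OF cd] b by auto
  have nz: "g r \<noteq> 0" using run_nonempty[OF r(2,3)] .
  have uniq: "\<And>r'. cut g r' < b \<Longrightarrow> b \<le> cut g (Suc r') \<Longrightarrow> r' = r"
    using neg_unique[OF r(2,3)] by metis
  show ?thesis
  proof (cases "g r < 0")
    case True
    have "neg g b" unfolding neg_def using r True by blast
    moreover have "\<not> neg (\<lambda>i. - g i) b"
    proof
      assume "neg (\<lambda>i. - g i) b"
      then obtain r' where "r' < d" "cut g r' < b" "b \<le> cut g (Suc r')" "- g r' < 0"
        unfolding neg_def cut_neg by blast
      then show False using uniq True by fastforce
    qed
    ultimately show ?thesis unfolding sg_def by simp
  next
    case False
    then have pos: "g r > 0" using nz by simp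
    have "neg (\<lambda>i. - g i) b" unfolding neg_def cut_neg using r pos by auto
    moreover have "\<not> neg g b"
    proof
      assume "neg g b"
      then obtain r' where "r' < d" "cut g r' < b" "b \<le> cut g (Suc r')" "g r' < 0"
        unfolding neg_def by blast
      then show False using uniq pos by fastforce
    qed
    ultimately show ?thesis unfolding sg_def by simp
  qed
qed

lemma Q_antipodal:
  assumes bx: "inbox g" and i: "i < d" "\<bar>g i\<bar> = int M"
  shows "Q (\<lambda>i. - g i) j = - Q g j"
  unfolding Q_def using sg_antipodal[OF bx i] by (simp add: sum_negf[symmetric])

end

context neck begin

definition cc :: "nat \<Rightarrow> int" where "cc j = 2 * int d * int (z j)"
definition bad :: "(nat \<Rightarrow> int) \<Rightarrow> bool" where "bad g \<longleftrightarrow> (\<exists>j<d. cc j < \<bar>Q g j\<bar>)"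
definition jsel :: "(nat \<Rightarrow> int) \<Rightarrow> nat" where "jsel g = (LEAST j. j < d \<and> cc j < \<bar>Q g j\<bar>)"
definition lam :: "(nat \<Rightarrow> int) \<Rightarrow> int" where
  "lam g = (if bad g then sgn (Q g (jsel g)) * int (Suc (jsel g)) else 1)"

lemma jsel_props:
  assumes "bad g" shows "jsel g < d" "cc (jsel g) < \<bar>Q g (jsel g)\<bar>"
proof -
  have "\<exists>j. j < d \<and> cc j < \<bar>Q g j\<bar>" using assms unfolding bad_def by blast
  then have "jsel g < d \<and> cc (jsel g) < \<bar>Q g (jsel g)\<bar>" unfolding jsel_def by (rule LeastI_ex)
  then show "jsel g < d" "cc (jsel g) < \<bar>Q g (jsel g)\<bar>" by auto
qed

lemma cc_nonneg: "0 \<le> cc j" unfolding cc_def by simp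

lemma lam_abs:
  assumes "bad g" shows "\<bar>lam g\<bar> = int (Suc (jsel g))"
proof -
  have "Q g (jsel g) \<noteq> 0" using jsel_props[OF assms] cc_nonneg[of "jsel g"] by auto
  then have "\<bar>sgn (Q g (jsel g))\<bar> = 1" by (simp add: abs_sgn_eq)
  then show ?thesis unfolding lam_def using assms by (simp add: abs_mult)
qed

lemma inbox_emb:
  assumes "sv d \<epsilon>" "KS M (spt \<epsilon>) s" "w \<in> s"
  shows "inbox (emb M \<epsilon> w)"
proof -
  have "\<bar>emb M \<epsilon> w i\<bar> \<le> int M" for i
  proof -
    have wle: "w i \<le> M" using KS_vertex(1)[OF assms(2,3)] .
    have "\<epsilon> i \<in> {-1,0,1}" using assms(1) unfolding sv_def by blast
    then have e: "\<bar>\<epsilon> i\<bar> \<le> 1" by auto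
    have "\<bar>emb M \<epsilon> w i\<bar> = \<bar>\<epsilon> i\<bar> * \<bar>int M - int (w i)\<bar>" unfolding emb_def by (simp add: abs_mult)
    also have "\<dots> \<le> 1 * \<bar>int M - int (w i)\<bar>" using e by (intro mult_right_mono) auto
    also have "\<dots> \<le> int M" using wle by simp
    finally show ?thesis .
  qed
  moreover have "\<forall>i\<ge>d. emb M \<epsilon> w i = 0" using assms(1) unfolding sv_def emb_def by simp
  ultimately show ?thesis unfolding inbox_def by blast
qed

lemma emb_close:
  assumes "sv d \<epsilon>" "KS M (spt \<epsilon>) s" "u \<in> s" "v \<in> s"
  shows "\<forall>i. \<bar>emb M \<epsilon> u i - emb M \<epsilon> v i\<bar> \<le> 1"
proof
  fix i
  have "\<epsilon> i \<in> {-1,0,1}" using assms(1) unfolding sv_def by blast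
  then have e: "\<bar>\<epsilon> i\<bar> \<le> 1" by auto
  have c1: "u i \<le> Suc (v i)" "v i \<le> Suc (u i)" using KS_close[OF assms(2)] assms(3,4) by blast+
  have "\<bar>emb M \<epsilon> u i - emb M \<epsilon> v i\<bar> = \<bar>\<epsilon> i\<bar> * \<bar>int (v i) - int (u i)\<bar>"
    unfolding emb_def by (simp add: abs_mult[symmetric] algebra_simps)
  also have "\<dots> \<le> 1 * 1" using e c1 by (intro mult_mono) auto
  finally show "\<bar>emb M \<epsilon> u i - emb M \<epsilon> v i\<bar> \<le> 1" by simp
qed

lemma inbox_neg: "inbox g \<Longrightarrow> inbox (\<lambda>i. - g i)"
  unfolding inbox_def by simp

lemma exists_good: "\<exists>g. inbox g \<and> \<not> bad g"
proof (rule ccontr)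
  assume "\<not> ?thesis"
  then have H: "\<And>g. inbox g \<Longrightarrow> bad g" by blast
  have "\<exists>\<epsilon> s u v. sv d \<epsilon> \<and> KS M (spt \<epsilon>) s \<and> u \<in> s \<and> v \<in> s \<and> lam (emb M \<epsilon> u) = - lam (emb M \<epsilon> v)"
  proof (rule tucker_grid)
    show "1 \<le> d" using d_pos .
    show "0 < M" using M_pos .
    fix \<epsilon> s w assume a: "sv d \<epsilon>" "KS M (spt \<epsilon>) s" "w \<in> s"
    have b: "bad (emb M \<epsilon> w)" using H[OF inbox_emb[OF a]] .
    show "1 \<le> \<bar>lam (emb M \<epsilon> w)\<bar> \<and> \<bar>lam (emb M \<epsilon> w)\<bar> \<le> int d"
      using lam_abs[OF b] jsel_props(1)[OF b] by simp
  next
    fix \<epsilon> s w j assume a: "sv d \<epsilon>" "KS M (spt \<epsilon>) s" "w \<in> s" "\<epsilon> j \<noteq> 0" "w j = 0"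
    define g where "g = emb M \<epsilon> w"
    have bx: "inbox g" unfolding g_def using inbox_emb[OF a(1-3)] .
    have jd: "j < d" using a(1,4) unfolding sv_def by (meson not_le)
    have gj: "\<bar>g j\<bar> = int M" unfolding g_def emb_def using a(5) sv_abs[OF a(1,4)] by simp
    have Qn: "Q (\<lambda>i. - g i) = (\<lambda>j. - Q g j)" using Q_antipodal[OF bx jd gj] by (simp add: fun_eq_iff)
    have bg: "bad g" using H[OF bx] .
    have bng: "bad (\<lambda>i. - g i)" using H[OF inbox_neg[OF bx]] .
    have js: "jsel (\<lambda>i. - g i) = jsel g" unfolding jsel_def Qn by simp
    have "lam (\<lambda>i. - g i) = - lam g" unfolding lam_def using bg bng js Qn by (simp add: sgn_minus)
    moreover have "- emb M \<epsilon> w = (\<lambda>i. - g i)" unfolding g_def by (simp add: fun_eq_iff)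
    ultimately show "lam (- emb M \<epsilon> w) = - lam (emb M \<epsilon> w)" unfolding g_def by simp
  qed
  then obtain \<epsilon> s u v where uv: "sv d \<epsilon>" "KS M (spt \<epsilon>) s" "u \<in> s" "v \<in> s"
    "lam (emb M \<epsilon> u) = - lam (emb M \<epsilon> v)" by blast
  define gu where "gu = emb M \<epsilon> u"
  define gv where "gv = emb M \<epsilon> v"
  have bu: "inbox gu" "inbox gv" unfolding gu_def gv_def using inbox_emb uv by auto
  have cl: "\<forall>i. \<bar>gu i - gv i\<bar> \<le> 1" unfolding gu_def gv_def using emb_close[OF uv(1-4)] .
  have badu: "bad gu" and badv: "bad gv" using H bu by auto
  have lu: "lam gu = - lam gv" using uv(5) unfolding gu_def gv_def .
  have "int (Suc (jsel gu)) = int (Suc (jsel gv))" using lam_abs[OF badu] lam_abs[OF badv] lu by simp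
  then have jj: "jsel gu = jsel gv" by simp
  define j where "j = jsel gu"
  have jd: "j < d" unfolding j_def using jsel_props(1)[OF badu] .
  have qu: "cc j < \<bar>Q gu j\<bar>" unfolding j_def using jsel_props(2)[OF badu] .
  have qv: "cc j < \<bar>Q gv j\<bar>" unfolding j_def jj using jsel_props(2)[OF badv] .
  have "sgn (Q gu j) * int (Suc j) = - (sgn (Q gv j) * int (Suc j))"
    using lu unfolding lam_def j_def using badu badv jj by simp
  then have "(sgn (Q gu j) + sgn (Q gv j)) * int (Suc j) = 0" by (simp add: algebra_simps)
  then have sg: "sgn (Q gu j) = - sgn (Q gv j)" by simp
  have "\<bar>Q gu j - Q gv j\<bar> = \<bar>Q gu j\<bar> + \<bar>Q gv j\<bar>"
  proof -
    have "Q gu j \<noteq> 0" "Q gv j \<noteq> 0" using qu qv cc_nonneg[of j] by auto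
    then show ?thesis using sg by (auto simp: sgn_if split: if_splits)
  qed
  then have "\<bar>Q gu j - Q gv j\<bar> > 2 * cc j" using qu qv by simp
  moreover have "\<bar>Q gu j - Q gv j\<bar> \<le> 4 * int d * int (z j)" using Q_close[OF cl bu jd] .
  ultimately show False unfolding cc_def by simp
qed

end

context neck begin

definition aa :: "(nat \<Rightarrow> int) \<Rightarrow> nat \<Rightarrow> nat" where
  "aa g i = (if g (2*(i-1)) < 0 then cut g (2*(i-1)) + 1
             else if g (2*(i-1)+1) < 0 then cut g (2*(i-1)+1) + 1 else cut g (2*(i-1)) + 1)"
definition bb :: "(nat \<Rightarrow> int) \<Rightarrow> nat \<Rightarrow> nat" where
  "bb g i = (if g (2*(i-1)+1) < 0 then cut g (2*(i-1)+2) + 1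
             else if g (2*(i-1)) < 0 then cut g (2*(i-1)+1) + 1 else cut g (2*(i-1)) + 1)"

lemma aa_ge: "cut g (2*(i-1)) + 1 \<le> aa g i"
  unfolding aa_def using cut_mono[of "2*(i-1)" "2*(i-1)+1" g] by auto

lemma aa_le: "aa g i \<le> cut g (2*(i-1)+1) + 1"
  unfolding aa_def using cut_mono[of "2*(i-1)" "2*(i-1)+1" g] by auto

lemma bb_le: "bb g i \<le> cut g (2*(i-1)+2) + 1"
  unfolding bb_def using cut_mono[of "2*(i-1)" "2*(i-1)+2" g] cut_mono[of "2*(i-1)+1" "2*(i-1)+2" g] by auto

lemma aa_le_bb: "aa g i \<le> bb g i"
  unfolding aa_def bb_def using cut_mono[of "2*(i-1)" "2*(i-1)+1" g] cut_mono[of "2*(i-1)+1" "2*(i-1)+2" g]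
    cut_mono[of "2*(i-1)" "2*(i-1)+2" g] by auto

lemma bb_le_aa: "1 \<le> i \<Longrightarrow> bb g i \<le> aa g (i+1)"
proof -
  assume i: "1 \<le> i"
  have "bb g i \<le> cut g (2*(i-1)+2) + 1" by (rule bb_le)
  also have "2*(i-1)+2 = 2*((i+1)-1)" using i by simp
  also have "cut g (2*((i+1)-1)) + 1 \<le> aa g (i+1)" by (rule aa_ge)
  finally show ?thesis .
qed

lemma I_char:
  assumes bx: "inbox g"
  shows "(\<Union>i\<in>{1..n}. {aa g i..<bb g i}) = {t\<in>{1..m}. neg g t}"
proof (intro equalityI subsetI)
  fix t assume "t \<in> (\<Union>i\<in>{1..n}. {aa g i..<bb g i})"
  then obtain i where i: "i \<in> {1..n}" "aa g i \<le> t" "t < bb g i" by auto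
  define r0 where "r0 = 2*(i-1)"
  have r0d: "Suc r0 < d" unfolding r0_def d_def using i(1) by auto
  have t1: "1 \<le> t" using aa_ge[of g i] i(2) by simp
  have tm: "t \<le> m"
  proof -
    have "t < cut g (2*(i-1)+2) + 1" using bb_le[of g i] i(3) by simp
    moreover have "cut g (2*(i-1)+2) \<le> m" using cut_le_m[OF bx] r0d unfolding r0_def by simp
    ultimately show ?thesis by simp
  qed
  have "neg g t"
  proof (cases "g (Suc r0) < 0")
    case True
    have bbv: "bb g i = cut g (Suc (Suc r0)) + 1" unfolding bb_def r0_def using True r0_def by simp
    have "cut g r0 < t"
    proof (cases "g r0 < 0")
      case True then show ?thesis using i(2) unfolding aa_def r0_def by simp
    next
      case False
      have "aa g i = cut g (Suc r0) + 1" unfolding aa_def using False \<open>g (Suc r0) < 0\<close> by (simp add: r0_def)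
      then show ?thesis using i(2) cut_mono[of r0 "Suc r0" g] by simp
    qed
    show ?thesis
    proof (cases "t \<le> cut g (Suc r0)")
      case le: True
      show ?thesis
      proof (cases "g r0 < 0")
        case True
        then show ?thesis unfolding neg_def using r0d \<open>cut g r0 < t\<close> le by (intro exI[of _ r0]) auto
      next
        case False
        have "aa g i = cut g (Suc r0) + 1" unfolding aa_def using False \<open>g (Suc r0) < 0\<close> by (simp add: r0_def)
        then show ?thesis using i(2) le by simp
      qed
    next
      case False
      then show ?thesis unfolding neg_def using r0d i(3) bbv True by (intro exI[of _ "Suc r0"]) auto
    qed
  next
    case F1: False
    show ?thesis
    proof (cases "g r0 < 0")
      case True
      have "aa g i = cut g r0 + 1" "bb g i = cut g (Suc r0) + 1"
        unfolding aa_def bb_def using True F1 by (simp_all add: r0_def)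
      then show ?thesis unfolding neg_def using r0d i(2,3) True by (intro exI[of _ r0]) auto
    next
      case False
      have "aa g i = cut g r0 + 1" "bb g i = cut g r0 + 1"
        unfolding aa_def bb_def using False F1 by (simp_all add: r0_def)
      then show ?thesis using i(2,3) by simp
    qed
  qed
  then show "t \<in> {t\<in>{1..m}. neg g t}" using t1 tm by simp
next
  fix t assume "t \<in> {t\<in>{1..m}. neg g t}"
  then obtain r where r: "r < d" "cut g r < t" "t \<le> cut g (Suc r)" "g r < 0" unfolding neg_def by auto
  define i where "i = r div 2 + 1"
  have iin: "i \<in> {1..n}" unfolding i_def using r(1) unfolding d_def by auto
  have r0: "2*(i-1) = r - r mod 2" unfolding i_def by presburger
  show "t \<in> (\<Union>i\<in>{1..n}. {aa g i..<bb g i})"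
  proof (cases "even r")
    case True
    then have rr: "2*(i-1) = r" using r0 by simp
    have "aa g i = cut g r + 1" unfolding aa_def rr using r(4) by simp
    moreover have "cut g (Suc r) + 1 \<le> bb g i"
      unfolding bb_def rr using r(4) cut_mono[of "Suc r" "r+2" g] by auto
    ultimately show ?thesis using iin r(2,3) by fastforce
  next
    case False
    then have rr: "2*(i-1) + 1 = r" using r0 by presburger
    have "bb g i = cut g (Suc r) + 1" unfolding bb_def rr using r(4) rr by (simp add: numeral_2_eq_2)
    moreover have "aa g i \<le> cut g r + 1" using aa_le[of g i] rr by simp
    ultimately show ?thesis using iin r(2,3) by fastforce
  qed
qed

end

context neck begin

lemma sum_identity:
  assumes I0: "I0 \<subseteq> {1..m}" and neg_iff: "\<And>t. t \<in> {1..m} \<Longrightarrow> neg g t \<longleftrightarrow> t \<in> I0"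
  shows "2 * ((\<Sum>t\<in>I0. real (x t j)) + (\<Sum>t\<in>{1..m} - I0. real (y t j)))
         - (\<Sum>t=1..m. real (x t j) + real (y t j)) = - real_of_int (Q g j)"
proof -
  have fin: "finite I0" "finite ({1..m} - I0)" using I0 finite_subset by auto
  have un: "{1..m} = I0 \<union> ({1..m} - I0)" using I0 by blast
  have dis: "I0 \<inter> ({1..m} - I0) = {}" by blast
  have "real_of_int (Q g j) = (\<Sum>t\<in>{1..m}. real_of_int (sg g t * dv t j))" unfolding Q_def by simp
  also have "\<dots> = (\<Sum>t\<in>I0. real_of_int (sg g t * dv t j)) + (\<Sum>t\<in>{1..m} - I0. real_of_int (sg g t * dv t j))"
    by (subst un, rule sum.union_disjoint[OF fin dis])
  also have "(\<Sum>t\<in>I0. real_of_int (sg g t * dv t j)) = (\<Sum>t\<in>I0. real (y t j) - real (x t j))"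
  proof (rule sum.cong[OF refl])
    fix t assume "t \<in> I0"
    then have "neg g t" using neg_iff I0 by blast
    then show "real_of_int (sg g t * dv t j) = real (y t j) - real (x t j)" unfolding sg_def dv_def by simp
  qed
  also have "(\<Sum>t\<in>{1..m} - I0. real_of_int (sg g t * dv t j)) = (\<Sum>t\<in>{1..m} - I0. real (x t j) - real (y t j))"
  proof (rule sum.cong[OF refl])
    fix t assume "t \<in> {1..m} - I0"
    then have "\<not> neg g t" using neg_iff by blast
    then show "real_of_int (sg g t * dv t j) = real (x t j) - real (y t j)" unfolding sg_def dv_def by simp
  qed
  finally have q: "real_of_int (Q g j) = (\<Sum>t\<in>I0. real (y t j) - real (x t j)) + (\<Sum>t\<in>{1..m} - I0. real (x t j) - real (y t j))" .
  have s: "(\<Sum>t=1..m. real (x t j) + real (y t j)) = (\<Sum>t\<in>I0. real (x t j) + real (y t j)) + (\<Sum>t\<in>{1..m} - I0. real (x t j) + real (y t j))"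
    by (subst un, rule sum.union_disjoint[OF fin dis])
  show ?thesis unfolding q s by (simp add: sum.distrib sum_subtractf algebra_simps)
qed

lemma final_neck:
  "\<exists>a b :: nat \<Rightarrow> nat.
           1 \<le> a 1 \<and> (\<forall>i\<in>{1..n}. a i \<le> b i) \<and>
           (\<forall>i\<in>{1..<n}. b i \<le> a (i+1)) \<and> b n \<le> m + 1 \<and>
           (let I = (\<Union>i\<in>{1..n}. {a i..<b i}) in
             \<forall>j<2*n.
               - 2 * real n * real (z j) + (\<Sum>i=1..m. real (x i j) + real (y i j)) / 2
                 \<le> (\<Sum>i\<in>I. real (x i j)) + (\<Sum>i\<in>{1..m} - I. real (y i j))
             \<and> (\<Sum>i\<in>I. real (x i j)) + (\<Sum>i\<in>{1..m} - I. real (y i j))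
                 \<le> 2 * real n * real (z j) + (\<Sum>i=1..m. real (x i j) + real (y i j)) / 2)"
proof -
  obtain g where g: "inbox g" "\<not> bad g" using exists_good by blast
  define I0 where "I0 = {t\<in>{1..m}. neg g t}"
  have Ieq: "(\<Union>i\<in>{1..n}. {aa g i..<bb g i}) = I0" unfolding I0_def by (rule I_char[OF g(1)])
  have c1: "1 \<le> aa g 1" using aa_ge[of g 1] by simp
  have c2: "\<forall>i\<in>{1..n}. aa g i \<le> bb g i" using aa_le_bb by blast
  have c3: "\<forall>i\<in>{1..<n}. bb g i \<le> aa g (i+1)" using bb_le_aa by auto
  have c4: "bb g n \<le> m + 1"
  proof -
    have "2*(n-1)+2 = d" unfolding d_def using n1 by simp
    then have "bb g n \<le> cut g d + 1" using bb_le[of g n] by simp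
    also have "cut g d \<le> m" using cut_le_m[OF g(1)] by simp
    finally show ?thesis by simp
  qed
  have c5: "- 2 * real n * real (z j) + (\<Sum>i=1..m. real (x i j) + real (y i j)) / 2
                 \<le> (\<Sum>i\<in>I0. real (x i j)) + (\<Sum>i\<in>{1..m} - I0. real (y i j))
             \<and> (\<Sum>i\<in>I0. real (x i j)) + (\<Sum>i\<in>{1..m} - I0. real (y i j))
                 \<le> 2 * real n * real (z j) + (\<Sum>i=1..m. real (x i j) + real (y i j)) / 2" if j: "j < 2*n" for j
  proof -
    have jd: "j < d" using j unfolding d_def .
    have "\<not> cc j < \<bar>Q g j\<bar>" using g(2) jd unfolding bad_def by blast
    then have "\<bar>Q g j\<bar> \<le> cc j" by simp
    then have qb0: "real_of_int \<bar>Q g j\<bar> \<le> real_of_int (cc j)" by (simp only: of_int_le_iff)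
    have "real_of_int (cc j) = 4 * real n * real (z j)" unfolding cc_def d_def by simp
    then have qb: "\<bar>real_of_int (Q g j)\<bar> \<le> 4 * real n * real (z j)" using qb0 by simp
    have idn: "2 * ((\<Sum>t\<in>I0. real (x t j)) + (\<Sum>t\<in>{1..m} - I0. real (y t j)))
         - (\<Sum>t=1..m. real (x t j) + real (y t j)) = - real_of_int (Q g j)"
      by (rule sum_identity) (auto simp: I0_def)
    show ?thesis using qb idn by (simp add: abs_le_iff)
  qed
  show ?thesis
    apply (rule exI[of _ "aa g"], rule exI[of _ "bb g"])
    using c1 c2 c3 c4 c5 unfolding Let_def Ieq by blast
qed

end

theorem lemma6:
  fixes n m :: nat
    and x y :: "nat \<Rightarrow> nat \<Rightarrow> nat"
    and z :: "nat \<Rightarrow> nat"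
  assumes "n \<ge> 1" and "m \<ge> 1"
    and "\<forall>i\<in>{1..m}. \<forall>j<2*n. x i j \<le> z j"
    and "\<forall>i\<in>{1..m}. \<forall>j<2*n. y i j \<le> z j"
  shows "\<exists>a b :: nat \<Rightarrow> nat.
           1 \<le> a 1 \<and> (\<forall>i\<in>{1..n}. a i \<le> b i) \<and>
           (\<forall>i\<in>{1..<n}. b i \<le> a (i+1)) \<and> b n \<le> m + 1 \<and>
           (let I = (\<Union>i\<in>{1..n}. {a i..<b i}) in
             \<forall>j<2*n.
               - 2 * real n * real (z j) + (\<Sum>i=1..m. real (x i j) + real (y i j)) / 2
                 \<le> (\<Sum>i\<in>I. real (x i j)) + (\<Sum>i\<in>{1..m} - I. real (y i j))
             \<and> (\<Sum>i\<in>I. real (x i j)) + (\<Sum>i\<in>{1..m} - I. real (y i j))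
                 \<le> 2 * real n * real (z j) + (\<Sum>i=1..m. real (x i j) + real (y i j)) / 2)"
proof -
  interpret neck n m x y z using assms by unfold_locales
  show ?thesis by (rule final_neck)
qed

end
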